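(* Let $(X,\Sigma)$ be a random pair valued in $\mathcal{X}\times\mathfrak{S}_n$, where $\mathcal{X}\subset\mathbb{R}^d$ ($d\ge1$) is equipped with a norm $\|\cdot\|$ and $X\sim\mu$. Suppose that $P_x\in\mathcal{T}$ for all $x\in\mathcal{X}$, and that there exists $M<\infty$ such that $$\sum_{i<j}|p_{i,j}(x)-p_{i,j}(x')|\le M\|x-x'\|\quad\text{for all } x,x'\in\mathcal{X}.$$ Let $\mathcal{P}$ be a finite partition of $\mathcal{X}$ into measurable cells of positive $\mu$-measure, and let $\delta_{\mathcal{P}}=\max_{\mathcal{C}\in\mathcal{P}}\sup_{(x,x')\in\mathcal{C}^2}\|x-x'\|$. (1) For every $s_{\mathcal{P}}\in\mathcal{S}^*_{\mathcal{P}}$ we have $\mathcal{R}(s_{\mathcal{P}})-\mathcal{R}^*\le M\cdot\delta_{\mathcal{P}}$. Hence, if $(\mathcal{P}_m)_{m\ge1}$ is a sequence of such partitions with $\delta_{\mathcal{P}_m}\to0$, then $\mathcal{R}(s_{\mathcal{P}_m})\to\mathcal{R}^*$ as $m\to\infty$ for any choice $s_{\mathcal{P}_m}\in\mathcal{S}^*_{\mathcal{P}_m}$. (2) Suppose in addition that $H=\inf_{x\in\mathcal{X}}\min_{i<j}|p_{i,j}(x)-1/2|>0$ and that $P_{\mathcal{C}}\in\mathcal{T}$ for all $\mathcal{C}\in\mathcal{P}$. Let $s^*_{\mathcal{P}}(x)=\sum_{\mathcal{C}\in\mathcal{P}}\sigma^*_{P_{\mathcal{C}}}\mathbb{I}\{x\in\mathcal{C}\}$.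 Then $$\mathbb{E}\big[d_\tau(\sigma^*_{P_X},s^*_{\mathcal{P}}(X))\big]\le\sup_{x\in\mathcal{X}}d_\tau(\sigma^*_{P_x},s^*_{\mathcal{P}}(x))\le (M/H)\cdot\delta_{\mathcal{P}}.$$
   Context: $\mathfrak{S}_n$ is the set of permutations of $\{1,\dots,n\}$. The Kendall $\tau$ distance is $d_\tau(\sigma,\sigma')=\sum_{i<j}\mathbb{I}\{(\sigma(i)-\sigma(j))(\sigma'(i)-\sigma'(j))<0\}$. Conditional objects: $P_x$ is the conditional distribution of $\Sigma$ given $X=x$, and $p_{i,j}(x)=\mathbb{P}\{\Sigma(i)<\Sigma(j)\mid X=x\}$. For a measurable $\mathcal{C}$ with $\mu(\mathcal{C})>0$, $P_{\mathcal{C}}$ is the conditional distribution of $\Sigma$ given $X\in\mathcal{C}$. $\mathcal{T}$ is the set of strictly stochastically transitive distributions on $\mathfrak{S}_n$. These are the $P$ with pairwise probabilities $p_{i,j}=\mathbb{P}_{\Sigma\sim P}\{\Sigma(i)<\Sigma(j)\}$ such that (a) $p_{i,j}\ge1/2$ and $p_{j,k}\ge1/2$ imply $p_{i,k}\ge1/2$, and (b) $p_{i,j}\ne1/2$ for all $i<j$. For $P\in\mathcal{T}$ the unique minimizer of $\sigma\mapsto\mathbb{E}_{\Sigma\sim P}[d_\tau(\Sigma,\sigma)]$ (Kemeny median) is denoted $\sigma^*_P$. The risk of a measurable rule $s:\mathcal{X}\to\mathfrak{S}_n$ is $\mathcal{R}(s)=\mathbb{E}[d_\tau(s(X),\Sigma)]$,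 and $\mathcal{R}^*$ is the infimum over all such rules. $\mathcal{S}_{\mathcal{P}}$ is the set of rules constant on each cell of $\mathcal{P}$. $\mathcal{S}^*_{\mathcal{P}}$ is the set of minimizers of $\mathcal{R}$ over $\mathcal{S}_{\mathcal{P}}$; equivalently, the rules whose value on each cell $\mathcal{C}$ is a Kemeny median of $P_{\mathcal{C}}$. *)

theory Defs
  imports "HOL-Probability.Probability" "HOL-Combinatorics.Permutations"
begin

definition perms :: "nat \<Rightarrow> (nat \<Rightarrow> nat) set" where
  "perms n = {\<sigma>. \<sigma> permutes {1..n}}"

definition kendall :: "nat \<Rightarrow> (nat \<Rightarrow> nat) \<Rightarrow> (nat \<Rightarrow> nat) \<Rightarrow> real" where
  "kendall n \<sigma> \<sigma>' = (\<Sum>i\<in>{1..n}. \<Sum>j\<in>{i<..n}.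
     if (int (\<sigma> i) - int (\<sigma> j)) * (int (\<sigma>' i) - int (\<sigma>' j)) < 0 then 1 else 0)"

definition is_dist :: "nat \<Rightarrow> ((nat \<Rightarrow> nat) \<Rightarrow> real) \<Rightarrow> bool" where
  "is_dist n Q \<longleftrightarrow> (\<forall>\<sigma>\<in>perms n. 0 \<le> Q \<sigma>) \<and> (\<Sum>\<sigma>\<in>perms n. Q \<sigma>) = 1"

definition pprob :: "nat \<Rightarrow> ((nat \<Rightarrow> nat) \<Rightarrow> real) \<Rightarrow> nat \<Rightarrow> nat \<Rightarrow> real" where
  "pprob n Q i j = (\<Sum>\<sigma>\<in>{\<sigma>\<in>perms n. \<sigma> i < \<sigma> j}. Q \<sigma>)"

definition SST :: "nat \<Rightarrow> ((nat \<Rightarrow> nat) \<Rightarrow> real) \<Rightarrow> bool" where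
  "SST n Q \<longleftrightarrow> is_dist n Q
     \<and> (\<forall>i\<in>{1..n}. \<forall>j\<in>{1..n}. \<forall>k\<in>{1..n}.
          pprob n Q i j \<ge> 1/2 \<and> pprob n Q j k \<ge> 1/2 \<longrightarrow> pprob n Q i k \<ge> 1/2)
     \<and> (\<forall>i\<in>{1..n}. \<forall>j\<in>{1..n}. i < j \<longrightarrow> pprob n Q i j \<noteq> 1/2)"

definition exp_dist :: "nat \<Rightarrow> ((nat \<Rightarrow> nat) \<Rightarrow> real) \<Rightarrow> (nat \<Rightarrow> nat) \<Rightarrow> real" where
  "exp_dist n Q \<sigma> = (\<Sum>\<tau>\<in>perms n. Q \<tau> * kendall n \<tau> \<sigma>)"

text \<open>Kemeny median (unique minimizer for Q in T).\<close>
definition kemeny :: "nat \<Rightarrow> ((nat \<Rightarrow> nat) \<Rightarrow> real) \<Rightarrow> (nat \<Rightarrow> nat)" where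
  "kemeny n Q = (THE \<sigma>. \<sigma> \<in> perms n \<and> (\<forall>\<sigma>'\<in>perms n. exp_dist n Q \<sigma> \<le> exp_dist n Q \<sigma>'))"

text \<open>Conditional distribution P_C of Sigma given X in C, where P x is the
  conditional distribution of Sigma given X = x and X ~ mu.\<close>
definition cond_cell :: "'a measure \<Rightarrow> ('a \<Rightarrow> (nat \<Rightarrow> nat) \<Rightarrow> real) \<Rightarrow> 'a set
    \<Rightarrow> (nat \<Rightarrow> nat) \<Rightarrow> real" where
  "cond_cell \<mu> P C = (\<lambda>\<sigma>. (LINT x:C|\<mu>. P x \<sigma>) / measure \<mu> C)"

definition rules :: "nat \<Rightarrow> 'a measure \<Rightarrow> 'a set \<Rightarrow> ('a \<Rightarrow> (nat \<Rightarrow> nat)) set" where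
  "rules n \<mu> \<X> = {s. (\<forall>x\<in>\<X>. s x \<in> perms n) \<and> (\<forall>\<sigma>. {x\<in>\<X>. s x = \<sigma>} \<in> sets \<mu>)}"

definition risk :: "nat \<Rightarrow> 'a measure \<Rightarrow> 'a set \<Rightarrow> ('a \<Rightarrow> (nat \<Rightarrow> nat) \<Rightarrow> real)
    \<Rightarrow> ('a \<Rightarrow> (nat \<Rightarrow> nat)) \<Rightarrow> real" where
  "risk n \<mu> \<X> P s = (LINT x:\<X>|\<mu>. (\<Sum>\<sigma>\<in>perms n. P x \<sigma> * kendall n (s x) \<sigma>))"

definition opt_risk :: "nat \<Rightarrow> 'a measure \<Rightarrow> 'a set \<Rightarrow> ('a \<Rightarrow> (nat \<Rightarrow> nat) \<Rightarrow> real) \<Rightarrow> real" where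
  "opt_risk n \<mu> \<X> P = (INF s\<in>rules n \<mu> \<X>. risk n \<mu> \<X> P s)"

definition is_partition :: "'a measure \<Rightarrow> 'a set \<Rightarrow> 'a set set \<Rightarrow> bool" where
  "is_partition \<mu> \<X> \<P> \<longleftrightarrow> finite \<P> \<and> \<Union>\<P> = \<X>
     \<and> (\<forall>C\<in>\<P>. \<forall>C'\<in>\<P>. C \<noteq> C' \<longrightarrow> C \<inter> C' = {})
     \<and> (\<forall>C\<in>\<P>. C \<in> sets \<mu> \<and> measure \<mu> C > 0)"

definition piecewise_rules :: "nat \<Rightarrow> 'a measure \<Rightarrow> 'a set \<Rightarrow> 'a set set \<Rightarrow> ('a \<Rightarrow> (nat \<Rightarrow> nat)) set" where
  "piecewise_rules n \<mu> \<X> \<P> = {s \<in> rules n \<mu> \<X>. \<forall>C\<in>\<P>. \<forall>x\<in>C. \<forall>x'\<in>C. s x = s x'}"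

definition opt_piecewise :: "nat \<Rightarrow> 'a measure \<Rightarrow> 'a set \<Rightarrow> ('a \<Rightarrow> (nat \<Rightarrow> nat) \<Rightarrow> real)
    \<Rightarrow> 'a set set \<Rightarrow> ('a \<Rightarrow> (nat \<Rightarrow> nat)) set" where
  "opt_piecewise n \<mu> \<X> P \<P> = {s \<in> piecewise_rules n \<mu> \<X> \<P>.
      \<forall>s'\<in>piecewise_rules n \<mu> \<X> \<P>. risk n \<mu> \<X> P s \<le> risk n \<mu> \<X> P s'}"

definition diam_part :: "('a::real_normed_vector \<Rightarrow> real) \<Rightarrow> 'a set set \<Rightarrow> ereal" where
  "diam_part N \<P> = Max ((\<lambda>C. SUP x\<in>C. SUP x'\<in>C. ereal (N (x - x'))) ` \<P>)"

definition cell_of :: "'a set set \<Rightarrow> 'a \<Rightarrow> 'a set" where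
  "cell_of \<P> x = (THE C. C \<in> \<P> \<and> x \<in> C)"

definition s_star :: "nat \<Rightarrow> 'a measure \<Rightarrow> ('a \<Rightarrow> (nat \<Rightarrow> nat) \<Rightarrow> real) \<Rightarrow> 'a set set
    \<Rightarrow> 'a \<Rightarrow> (nat \<Rightarrow> nat)" where
  "s_star n \<mu> P \<P> x = kemeny n (cond_cell \<mu> P (cell_of \<P> x))"

definition margin :: "nat \<Rightarrow> 'a set \<Rightarrow> ('a \<Rightarrow> (nat \<Rightarrow> nat) \<Rightarrow> real) \<Rightarrow> real" where
  "margin n \<X> P = (INF x\<in>\<X>. Min {\<bar>pprob n (P x) i j - 1/2\<bar> | i j. 1 \<le> i \<and> i < j \<and> j \<le> n})"

definition is_norm :: "('a::real_vector \<Rightarrow> real) \<Rightarrow> bool" where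
  "is_norm N \<longleftrightarrow> (\<forall>x. N x = 0 \<longleftrightarrow> x = 0) \<and> (\<forall>c x. N (c *\<^sub>R x) = \<bar>c\<bar> * N x)
     \<and> (\<forall>x y. N (x + y) \<le> N x + N y)"

end

theory Submission
  imports Defs
begin

definition Lp :: "nat \<Rightarrow> (nat \<Rightarrow> nat \<Rightarrow> real) \<Rightarrow> (nat \<Rightarrow> nat) \<Rightarrow> real" where
  "Lp n p \<sigma> = (\<Sum>i\<in>{1..n}. \<Sum>j\<in>{i<..n}. if \<sigma> i < \<sigma> j then 1 - p i j else p i j)"

definition majs :: "nat \<Rightarrow> (nat \<Rightarrow> nat \<Rightarrow> real) \<Rightarrow> nat \<Rightarrow> nat set" where
  "majs n p i = {k\<in>{1..n}. p k i > 1/2}"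

definition maj :: "nat \<Rightarrow> (nat \<Rightarrow> nat \<Rightarrow> real) \<Rightarrow> nat \<Rightarrow> nat" where
  "maj n p i = (if i \<in> {1..n} then Suc (card (majs n p i)) else i)"

definition goodp :: "nat \<Rightarrow> (nat \<Rightarrow> nat \<Rightarrow> real) \<Rightarrow> bool" where
  "goodp n p \<longleftrightarrow> (\<forall>i\<in>{1..n}. \<forall>j\<in>{1..n}. i \<noteq> j \<longrightarrow> p j i = 1 - p i j \<and> p i j \<noteq> 1/2)
     \<and> (\<forall>i\<in>{1..n}. p i i = 0)
     \<and> (\<forall>i\<in>{1..n}. \<forall>j\<in>{1..n}. \<forall>k\<in>{1..n}. p i j \<ge> 1/2 \<and> p j k \<ge> 1/2 \<longrightarrow> p i k \<ge> 1/2)"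

lemma finite_perms: "finite (perms n)"
  unfolding perms_def using finite_permutations[of "{1..n}"] by simp

lemma perm_in: "\<sigma> \<in> perms n \<Longrightarrow> i \<in> {1..n} \<Longrightarrow> \<sigma> i \<in> {1..n}"
  unfolding perms_def using permutes_in_image[of \<sigma> "{1..n}" i] by blast

lemma perm_out: "\<sigma> \<in> perms n \<Longrightarrow> i \<notin> {1..n} \<Longrightarrow> \<sigma> i = i"
  unfolding perms_def using permutes_not_in[of \<sigma> "{1..n}" i] by blast

lemma perm_inj: "\<sigma> \<in> perms n \<Longrightarrow> \<sigma> i = \<sigma> j \<Longrightarrow> i = j"
  unfolding perms_def using permutes_inj[of \<sigma> "{1..n}"] by (simp add: inj_eq)

lemma kendall_perm:
  assumes "\<sigma> \<in> perms n" "\<tau> \<in> perms n"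
  shows "kendall n \<sigma> \<tau> = (\<Sum>i\<in>{1..n}. \<Sum>j\<in>{i<..n}. if (\<sigma> i < \<sigma> j) \<noteq> (\<tau> i < \<tau> j) then 1 else 0)"
  unfolding kendall_def
proof (intro sum.cong refl)
  fix i j assume "i \<in> {1..n}" "j \<in> {i<..n}"
  then have "i \<noteq> j" by auto
  then have a: "\<sigma> i \<noteq> \<sigma> j" "\<tau> i \<noteq> \<tau> j" using perm_inj assms by blast+
  show "(if (int (\<sigma> i) - int (\<sigma> j)) * (int (\<tau> i) - int (\<tau> j)) < 0 then 1 else 0) =
        (if (\<sigma> i < \<sigma> j) \<noteq> (\<tau> i < \<tau> j) then 1 else (0::real))"
    using a by (auto simp: mult_less_0_iff)
qed

lemma pprob_compl:
  assumes "is_dist n Q" "i \<in> {1..n}" "j \<in> {1..n}" "i \<noteq> j"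
  shows "pprob n Q j i = 1 - pprob n Q i j"
proof -
  have "perms n = {\<sigma>\<in>perms n. \<sigma> i < \<sigma> j} \<union> {\<sigma>\<in>perms n. \<sigma> j < \<sigma> i}"
  proof -
    have "\<forall>\<sigma>\<in>perms n. \<sigma> i \<noteq> \<sigma> j" using perm_inj[of _ n i j] assms(4) by blast
    then show ?thesis by (auto simp: nat_neq_iff)
  qed
  moreover have "{\<sigma>\<in>perms n. \<sigma> i < \<sigma> j} \<inter> {\<sigma>\<in>perms n. \<sigma> j < \<sigma> i} = {}" by auto
  ultimately have "sum Q (perms n) = pprob n Q i j + pprob n Q j i"
    unfolding pprob_def by (metis (no_types, lifting) finite_Un finite_perms sum.union_disjoint)
  then show ?thesis using assms(1) unfolding is_dist_def by simp
qed

lemma pprob_ii: "pprob n Q i i = 0"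
  unfolding pprob_def by simp

lemma pprob_bounds:
  assumes "is_dist n Q"
  shows "0 \<le> pprob n Q i j" "pprob n Q i j \<le> 1"
proof -
  show "0 \<le> pprob n Q i j" unfolding pprob_def using assms unfolding is_dist_def
    by (intro sum_nonneg) auto
  have "pprob n Q i j \<le> sum Q (perms n)" unfolding pprob_def using assms unfolding is_dist_def
    by (intro sum_mono2 finite_perms) auto
  then show "pprob n Q i j \<le> 1" using assms unfolding is_dist_def by simp
qed

lemma exp_dist_Lp:
  assumes "is_dist n Q" "\<sigma> \<in> perms n"
  shows "exp_dist n Q \<sigma> = Lp n (pprob n Q) \<sigma>"
proof -
  have "exp_dist n Q \<sigma> = (\<Sum>\<tau>\<in>perms n. \<Sum>i\<in>{1..n}. \<Sum>j\<in>{i<..n}.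
          Q \<tau> * (if (\<tau> i < \<tau> j) \<noteq> (\<sigma> i < \<sigma> j) then 1 else 0))"
    unfolding exp_dist_def
    by (intro sum.cong refl) (simp add: kendall_perm assms sum_distrib_left)
  also have "\<dots> = (\<Sum>i\<in>{1..n}. \<Sum>j\<in>{i<..n}. \<Sum>\<tau>\<in>perms n.
          Q \<tau> * (if (\<tau> i < \<tau> j) \<noteq> (\<sigma> i < \<sigma> j) then 1 else 0))"
    by (subst sum.swap) (simp add: sum.swap[of _ "perms n"])
  also have "\<dots> = Lp n (pprob n Q) \<sigma>"
    unfolding Lp_def
  proof (intro sum.cong refl)
    fix i j assume ij: "i \<in> {1..n}" "j \<in> {i<..n}"
    then have ij': "j \<in> {1..n}" "i \<noteq> j" by auto
    show "(\<Sum>\<tau>\<in>perms n. Q \<tau> * (if (\<tau> i < \<tau> j) \<noteq> (\<sigma> i < \<sigma> j) then 1 else 0)) =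
          (if \<sigma> i < \<sigma> j then 1 - pprob n Q i j else pprob n Q i j)"
    proof (cases "\<sigma> i < \<sigma> j")
      case True
      have "(\<Sum>\<tau>\<in>perms n. Q \<tau> * (if (\<tau> i < \<tau> j) \<noteq> (\<sigma> i < \<sigma> j) then 1 else 0))
          = (\<Sum>\<tau>\<in>perms n. if \<tau> j < \<tau> i then Q \<tau> else 0)"
        using True perm_inj ij' by (intro sum.cong refl) (auto simp: nat_neq_iff)
      also have "\<dots> = pprob n Q j i" unfolding pprob_def by (simp add: sum.inter_filter finite_perms)
      finally show ?thesis using True pprob_compl[OF assms(1) ij(1) ij'] by simp
    next
      case False
      have "(\<Sum>\<tau>\<in>perms n. Q \<tau> * (if (\<tau> i < \<tau> j) \<noteq> (\<sigma> i < \<sigma> j) then 1 else 0))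
          = (\<Sum>\<tau>\<in>perms n. if \<tau> i < \<tau> j then Q \<tau> else 0)"
        using False by (intro sum.cong refl) auto
      also have "\<dots> = pprob n Q i j" unfolding pprob_def by (simp add: sum.inter_filter finite_perms)
      finally show ?thesis using False by simp
    qed
  qed
  finally show ?thesis .
qed

lemma SST_goodp: "SST n Q \<Longrightarrow> goodp n (pprob n Q)"
  unfolding goodp_def
proof (intro conjI ballI impI)
  assume S: "SST n Q"
  then have D: "is_dist n Q" unfolding SST_def by simp
  fix i j assume ij: "i \<in> {1..n}" "j \<in> {1..n}" "i \<noteq> j"
  show "pprob n Q j i = 1 - pprob n Q i j" using pprob_compl[OF D ij] .
  show "pprob n Q i j \<noteq> 1/2"
  proof (cases "i < j")
    case True then show ?thesis using S ij unfolding SST_def by blast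
  next
    case False then have "j < i" using ij by simp
    then have "pprob n Q j i \<noteq> 1/2" using S ij unfolding SST_def by blast
    then show ?thesis using pprob_compl[OF D ij] by simp
  qed
next
  fix i show "pprob n Q i i = 0" by (rule pprob_ii)
next
  fix i j k assume "SST n Q" "i \<in> {1..n}" "j \<in> {1..n}" "k \<in> {1..n}"
    "1/2 \<le> pprob n Q i j \<and> 1/2 \<le> pprob n Q j k"
  then show "1/2 \<le> pprob n Q i k" unfolding SST_def by blast
qed

lemma goodp_gt:
  assumes "goodp n p" "i \<in> {1..n}" "j \<in> {1..n}" "i \<noteq> j"
  shows "p j i > 1/2 \<longleftrightarrow> \<not> p i j > 1/2"
proof -
  have "p j i = 1 - p i j" "p i j \<noteq> 1/2" using assms unfolding goodp_def by blast+
  then show ?thesis by linarith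
qed

lemma majs_less:
  assumes g: "goodp n p" and ij: "i \<in> {1..n}" "j \<in> {1..n}" "i \<noteq> j" and pij: "p i j > 1/2"
  shows "card (majs n p i) < card (majs n p j)"
proof (rule psubset_card_mono)
  show "finite (majs n p j)" unfolding majs_def by simp
  have sub: "majs n p i \<subseteq> majs n p j"
  proof
    fix k assume k: "k \<in> majs n p i"
    then have k1: "k \<in> {1..n}" "p k i > 1/2" unfolding majs_def by auto
    have "k \<noteq> j"
    proof
      assume "k = j" then have "p j i > 1/2" using k1 by simp
      then show False using pij goodp_gt[OF g ij] by blast
    qed
    moreover have "p k j \<ge> 1/2"
    proof -
      have tr: "\<forall>i\<in>{1..n}. \<forall>j\<in>{1..n}. \<forall>k\<in>{1..n}. p i j \<ge> 1/2 \<and> p j k \<ge> 1/2 \<longrightarrow> p i k \<ge> 1/2"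
        using g unfolding goodp_def by blast
      have "p k i \<ge> 1/2" "p i j \<ge> 1/2" using k1 pij by auto
      then show ?thesis using tr k1(1) ij(1,2) by blast
    qed
    moreover have "p k j \<noteq> 1/2" using g k1 ij \<open>k \<noteq> j\<close> unfolding goodp_def by blast
    ultimately have "p k j > 1/2" by linarith
    then show "k \<in> majs n p j" using k1 unfolding majs_def by simp
  qed
  have "p i i = 0" using ij g unfolding goodp_def by blast
  then have "i \<in> majs n p j" "i \<notin> majs n p i" using ij pij unfolding majs_def by auto
  then show "majs n p i \<subset> majs n p j" using sub by blast
qed

lemma maj_lt:
  assumes g: "goodp n p" and ij: "i \<in> {1..n}" "j \<in> {1..n}" "i \<noteq> j"
  shows "maj n p i < maj n p j \<longleftrightarrow> p i j > 1/2"
proof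
  assume "p i j > 1/2" then show "maj n p i < maj n p j"
    using majs_less[OF g ij] ij unfolding maj_def by simp
next
  assume a: "maj n p i < maj n p j"
  show "p i j > 1/2"
  proof (rule ccontr)
    assume "\<not> p i j > 1/2"
    then have "p j i > 1/2" using goodp_gt[OF g ij] by simp
    then have "card (majs n p j) < card (majs n p i)" using majs_less[OF g ij(2,1)] ij by simp
    then show False using a ij unfolding maj_def by simp
  qed
qed

lemma maj_in:
  assumes g: "goodp n p" and i: "i \<in> {1..n}"
  shows "maj n p i \<in> {1..n}"
proof -
  have "p i i = 0" using i g unfolding goodp_def by blast
  then have "majs n p i \<subseteq> {1..n} - {i}" using i unfolding majs_def by auto
  then have "card (majs n p i) \<le> card ({1..n} - {i})" by (intro card_mono) auto
  also have "\<dots> = n - 1" using i by simp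
  finally show ?thesis using i unfolding maj_def by auto
qed

lemma maj_perm:
  assumes g: "goodp n p"
  shows "maj n p \<in> perms n"
proof -
  have inj: "inj_on (maj n p) {1..n}"
  proof (rule inj_onI, rule ccontr)
    fix i j assume ij: "i \<in> {1..n}" "j \<in> {1..n}" "maj n p i = maj n p j" "i \<noteq> j"
    have "\<not> maj n p i < maj n p j" "\<not> maj n p j < maj n p i" using ij(3) by auto
    then have "\<not> p i j > 1/2" "\<not> p j i > 1/2" using maj_lt[OF g ij(1,2,4)] maj_lt[OF g ij(2,1)] ij(4) by auto
    then show False using goodp_gt[OF g ij(1,2,4)] by blast
  qed
  have im: "maj n p ` {1..n} \<subseteq> {1..n}" using maj_in[OF g] by auto
  have "card (maj n p ` {1..n}) = card {1..n}" using card_image[OF inj] .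
  then have "maj n p ` {1..n} = {1..n}" using im by (intro card_subset_eq) auto
  then have "bij_betw (maj n p) {1..n} {1..n}" using inj unfolding bij_betw_def by simp
  moreover have "\<And>x. x \<notin> {1..n} \<Longrightarrow> maj n p x = x" unfolding maj_def by auto
  ultimately have "maj n p permutes {1..n}" by (rule bij_imp_permutes)
  then show ?thesis unfolding perms_def by simp
qed

lemma perm_rank:
  assumes s: "\<sigma> \<in> perms n" and i: "i \<in> {1..n}"
  shows "card {k\<in>{1..n}. \<sigma> k < \<sigma> i} = \<sigma> i - 1"
proof -
  have bij: "bij_betw \<sigma> {1..n} {1..n}" using s unfolding perms_def using permutes_imp_bij[of \<sigma> "{1..n}"] by blast
  then have inj: "inj_on \<sigma> {1..n}" and im: "\<sigma> ` {1..n} = {1..n}" unfolding bij_betw_def by auto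
  have "\<sigma> ` {k\<in>{1..n}. \<sigma> k < \<sigma> i} = {m\<in>{1..n}. m < \<sigma> i}"
  proof
    show "\<sigma> ` {k\<in>{1..n}. \<sigma> k < \<sigma> i} \<subseteq> {m\<in>{1..n}. m < \<sigma> i}"
      using perm_in[OF s] by blast
  next
    show "{m\<in>{1..n}. m < \<sigma> i} \<subseteq> \<sigma> ` {k\<in>{1..n}. \<sigma> k < \<sigma> i}"
    proof
      fix m assume m: "m \<in> {m\<in>{1..n}. m < \<sigma> i}"
      then have "m \<in> \<sigma> ` {1..n}" using im by simp
      then obtain k where "k \<in> {1..n}" "m = \<sigma> k" by blast
      then show "m \<in> \<sigma> ` {k\<in>{1..n}. \<sigma> k < \<sigma> i}" using m by blast
    qed
  qed
  also have "\<dots> = {1..<\<sigma> i}" using perm_in[OF s i] by auto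
  finally have e: "\<sigma> ` {k\<in>{1..n}. \<sigma> k < \<sigma> i} = {1..<\<sigma> i}" .
  have "inj_on \<sigma> {k\<in>{1..n}. \<sigma> k < \<sigma> i}" using inj by (rule inj_on_subset) blast
  then have "card (\<sigma> ` {k\<in>{1..n}. \<sigma> k < \<sigma> i}) = card {k\<in>{1..n}. \<sigma> k < \<sigma> i}" by (rule card_image)
  then show ?thesis using e by simp
qed

lemma perm_eq_orient:
  assumes s: "\<sigma> \<in> perms n" and t: "\<tau> \<in> perms n"
    and o: "\<And>i j. i \<in> {1..n} \<Longrightarrow> j \<in> {1..n} \<Longrightarrow> i < j \<Longrightarrow> (\<sigma> i < \<sigma> j \<longleftrightarrow> \<tau> i < \<tau> j)"
  shows "\<sigma> = \<tau>"
proof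
  fix i
  show "\<sigma> i = \<tau> i"
  proof (cases "i \<in> {1..n}")
    case False then show ?thesis using perm_out[OF s False] perm_out[OF t False] by simp
  next
    case True
    have o2: "\<sigma> k < \<sigma> i \<longleftrightarrow> \<tau> k < \<tau> i" if "k \<in> {1..n}" for k
    proof -
      consider "k < i" | "k = i" | "i < k" by linarith
      then show ?thesis
      proof cases
        case 1 then show ?thesis using o that True by blast
      next
        case 2 then show ?thesis by simp
      next
        case 3
        have "\<sigma> i \<noteq> \<sigma> k" using perm_inj[OF s, of i k] 3 by auto
        moreover have "\<tau> i \<noteq> \<tau> k" using perm_inj[OF t, of i k] 3 by auto
        ultimately show ?thesis using o[OF True that 3] by linarith
      qed
    qed
    then have "{k\<in>{1..n}. \<sigma> k < \<sigma> i} = {k\<in>{1..n}. \<tau> k < \<tau> i}" by auto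
    then have "\<sigma> i - 1 = \<tau> i - 1" using perm_rank[OF s True] perm_rank[OF t True] by simp
    moreover have "\<sigma> i \<ge> 1" "\<tau> i \<ge> 1" using perm_in[OF s True] perm_in[OF t True] by auto
    ultimately show ?thesis by simp
  qed
qed

lemma Lp_diff:
  assumes g: "goodp n p" and s: "\<sigma> \<in> perms n"
  shows "Lp n p \<sigma> - Lp n p (maj n p) =
    (\<Sum>i\<in>{1..n}. \<Sum>j\<in>{i<..n}. if (\<sigma> i < \<sigma> j) \<noteq> (p i j > 1/2) then \<bar>2 * p i j - 1\<bar> else 0)"
  unfolding Lp_def sum_subtractf[symmetric]
proof (intro sum.cong refl)
  fix i j assume ij: "i \<in> {1..n}" "j \<in> {i<..n}"
  then have ij': "j \<in> {1..n}" "i \<noteq> j" by auto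
  have m: "maj n p i < maj n p j \<longleftrightarrow> p i j > 1/2" using maj_lt[OF g ij(1) ij'] .
  have ne: "p i j \<noteq> 1/2" using g ij ij' unfolding goodp_def by blast
  show "(if \<sigma> i < \<sigma> j then 1 - p i j else p i j) - (if maj n p i < maj n p j then 1 - p i j else p i j) =
    (if (\<sigma> i < \<sigma> j) \<noteq> (p i j > 1/2) then \<bar>2 * p i j - 1\<bar> else 0)"
    using m ne by (auto simp: abs_if)
qed

lemma Lp_diff_nonneg_terms:
  "0 \<le> (if (\<sigma> i < \<sigma> j) \<noteq> (p i j > 1/2) then \<bar>2 * p i j - 1\<bar> else (0::real))"
  by simp

lemma Lp_min:
  assumes g: "goodp n p" and s: "\<sigma> \<in> perms n"
  shows "Lp n p (maj n p) \<le> Lp n p \<sigma>"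
proof -
  have "0 \<le> Lp n p \<sigma> - Lp n p (maj n p)" unfolding Lp_diff[OF g s]
    by (intro sum_nonneg) auto
  then show ?thesis by simp
qed

lemma kemeny_maj:
  assumes S: "SST n Q"
  shows "kemeny n Q = maj n (pprob n Q)"
proof -
  let ?p = "pprob n Q"
  have g: "goodp n ?p" using SST_goodp[OF S] .
  have D: "is_dist n Q" using S unfolding SST_def by simp
  have mp: "maj n ?p \<in> perms n" using maj_perm[OF g] .
  show ?thesis unfolding kemeny_def
  proof (rule the_equality)
    show "maj n ?p \<in> perms n \<and> (\<forall>\<sigma>'\<in>perms n. exp_dist n Q (maj n ?p) \<le> exp_dist n Q \<sigma>')"
      using mp Lp_min[OF g] exp_dist_Lp[OF D] by simp
  next
    fix \<sigma> assume a: "\<sigma> \<in> perms n \<and> (\<forall>\<sigma>'\<in>perms n. exp_dist n Q \<sigma> \<le> exp_dist n Q \<sigma>')"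
    then have s: "\<sigma> \<in> perms n" by simp
    have "exp_dist n Q \<sigma> \<le> exp_dist n Q (maj n ?p)" using a mp by blast
    then have "Lp n ?p \<sigma> \<le> Lp n ?p (maj n ?p)" using s mp exp_dist_Lp[OF D] by simp
    then have z: "(\<Sum>i\<in>{1..n}. \<Sum>j\<in>{i<..n}. if (\<sigma> i < \<sigma> j) \<noteq> (?p i j > 1/2) then \<bar>2 * ?p i j - 1\<bar> else 0) = 0"
      using Lp_diff[OF g s] Lp_min[OF g s] by linarith
    have "\<forall>i\<in>{1..n}. (\<Sum>j\<in>{i<..n}. if (\<sigma> i < \<sigma> j) \<noteq> (?p i j > 1/2) then \<bar>2 * ?p i j - 1\<bar> else 0) = 0"
      using z by (subst (asm) sum_nonneg_eq_0_iff) (auto intro!: sum_nonneg)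
    then have z2: "\<forall>i\<in>{1..n}. \<forall>j\<in>{i<..n}. (if (\<sigma> i < \<sigma> j) \<noteq> (?p i j > 1/2) then \<bar>2 * ?p i j - 1\<bar> else 0) = 0"
      by (subst (asm) sum_nonneg_eq_0_iff) auto
    show "\<sigma> = maj n ?p"
    proof (rule perm_eq_orient[OF s mp])
      fix i j assume ij: "i \<in> {1..n}" "j \<in> {1..n}" "i < j"
      have ne: "?p i j \<noteq> 1/2" using g ij unfolding goodp_def by (metis less_irrefl)
      have "j \<in> {i<..n}" using ij by auto
      then have "(if (\<sigma> i < \<sigma> j) \<noteq> (?p i j > 1/2) then \<bar>2 * ?p i j - 1\<bar> else 0) = 0"
        using z2 ij(1) by blast
      then have "(\<sigma> i < \<sigma> j) = (?p i j > 1/2)" using ne by (auto split: if_splits)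
      then show "(\<sigma> i < \<sigma> j) = (maj n ?p i < maj n ?p j)" using maj_lt[OF g ij(1,2)] ij by simp
    qed
  qed
qed

lemma kendall_maj:
  assumes "goodp n a" "goodp n b"
  shows "kendall n (maj n a) (maj n b) =
    (\<Sum>i\<in>{1..n}. \<Sum>j\<in>{i<..n}. if (a i j > 1/2) \<noteq> (b i j > 1/2) then 1 else 0)"
  unfolding kendall_perm[OF maj_perm[OF assms(1)] maj_perm[OF assms(2)]]
  by (intro sum.cong refl) (simp add: maj_lt[OF assms(1)] maj_lt[OF assms(2)])

lemma set_integral_partition:
  fixes f :: "'a \<Rightarrow> real"
  assumes "finite I" "\<And>x. indicator A x = (\<Sum>i\<in>I. indicator (B i) x :: real)"
    "\<And>i. i \<in> I \<Longrightarrow> set_integrable M (B i) f"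
  shows "(LINT x:A|M. f x) = (\<Sum>i\<in>I. LINT x:B i|M. f x)"
proof -
  have "(\<lambda>x. indicator A x *\<^sub>R f x) = (\<lambda>x. \<Sum>i\<in>I. indicator (B i) x *\<^sub>R f x)"
    using assms(2) by (simp add: sum_distrib_right)
  then show ?thesis unfolding set_lebesgue_integral_def
    using assms(3) unfolding set_integrable_def by (simp add: integral_sum)
qed

lemma kendall_sym: "kendall n a b = kendall n b a"
  unfolding kendall_def by (simp add: mult.commute)

lemma kendall_bounds: "0 \<le> kendall n a b" "kendall n a b \<le> real n * real n"
proof -
  show "0 \<le> kendall n a b" unfolding kendall_def by (intro sum_nonneg) auto
  have "kendall n a b \<le> (\<Sum>i\<in>{1..n}. \<Sum>j\<in>{i<..n}. (1::real))" unfolding kendall_def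
    by (intro sum_mono) auto
  also have "\<dots> \<le> (\<Sum>i\<in>{1..n}. real n)" by (intro sum_mono) auto
  also have "\<dots> = real n * real n" by simp
  finally show "kendall n a b \<le> real n * real n" .
qed

lemma Lp_bounds:
  assumes "\<And>i j. 0 \<le> p i j" "\<And>i j. p i j \<le> 1"
  shows "0 \<le> Lp n p \<sigma>" "Lp n p \<sigma> \<le> real n * real n"
proof -
  show "0 \<le> Lp n p \<sigma>" unfolding Lp_def using assms by (intro sum_nonneg) auto
  have "Lp n p \<sigma> \<le> (\<Sum>i\<in>{1..n}. \<Sum>j\<in>{i<..n}. (1::real))" unfolding Lp_def
    using assms by (intro sum_mono) auto
  also have "\<dots> \<le> (\<Sum>i\<in>{1..n}. real n)" by (intro sum_mono) auto
  also have "\<dots> = real n * real n" by simp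
  finally show "Lp n p \<sigma> \<le> real n * real n" .
qed

locale setting =
  fixes n :: nat and \<mu> :: "'a measure" and X :: "'a set" and P :: "'a \<Rightarrow> (nat \<Rightarrow> nat) \<Rightarrow> real"
  assumes ps: "prob_space \<mu>"
    and Xm: "X \<in> sets \<mu>"
    and X1: "emeasure \<mu> X = 1"
    and Pm: "\<forall>\<sigma>. set_borel_measurable \<mu> X (\<lambda>x. P x \<sigma>)"
    and sst: "\<forall>x\<in>X. SST n (P x)"
begin

interpretation prob_space \<mu> by (rule ps)

definition Pg :: "'a \<Rightarrow> (nat \<Rightarrow> nat) \<Rightarrow> real" where
  "Pg x \<sigma> = indicator X x * P x \<sigma>"

definition q :: "'a \<Rightarrow> nat \<Rightarrow> nat \<Rightarrow> real" where
  "q x = pprob n (Pg x)"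

definition Lg :: "'a \<Rightarrow> (nat \<Rightarrow> nat) \<Rightarrow> real" where
  "Lg x \<tau> = Lp n (q x) \<tau>"

lemma Pg_meas[measurable]: "(\<lambda>x. Pg x \<sigma>) \<in> borel_measurable \<mu>"
  using Pm unfolding set_borel_measurable_def Pg_def by simp

lemma q_meas[measurable]: "(\<lambda>x. q x i j) \<in> borel_measurable \<mu>"
  unfolding q_def pprob_def by measurable

lemma Lg_meas[measurable]: "(\<lambda>x. Lg x \<tau>) \<in> borel_measurable \<mu>"
  unfolding Lg_def Lp_def by measurable

lemma Pg_X: "x \<in> X \<Longrightarrow> Pg x = P x"
  unfolding Pg_def by auto

lemma q_X: "x \<in> X \<Longrightarrow> q x = pprob n (P x)"
  unfolding q_def by (simp add: Pg_X)

lemma dist_X: "x \<in> X \<Longrightarrow> is_dist n (P x)"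
  using sst unfolding SST_def by blast

lemma goodq: "x \<in> X \<Longrightarrow> goodp n (q x)"
  using sst SST_goodp q_X by auto

lemma q_bounds: "0 \<le> q x i j" "q x i j \<le> 1"
proof -
  show "0 \<le> q x i j"
  proof (cases "x \<in> X")
    case True then show ?thesis using q_X dist_X pprob_bounds by simp
  next
    case False then show ?thesis unfolding q_def pprob_def Pg_def by simp
  qed
  show "q x i j \<le> 1"
  proof (cases "x \<in> X")
    case True then show ?thesis using q_X dist_X pprob_bounds by simp
  next
    case False then show ?thesis unfolding q_def pprob_def Pg_def by simp
  qed
qed

lemma Lg_bounds: "0 \<le> Lg x \<tau>" "Lg x \<tau> \<le> real n * real n"
  unfolding Lg_def using Lp_bounds q_bounds by auto

lemma P_bounds: "x \<in> X \<Longrightarrow> \<sigma> \<in> perms n \<Longrightarrow> 0 \<le> P x \<sigma> \<and> P x \<sigma> \<le> 1"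
proof -
  assume x: "x \<in> X" and s: "\<sigma> \<in> perms n"
  have D: "is_dist n (P x)" using dist_X[OF x] .
  then have "0 \<le> P x \<sigma>" using s unfolding is_dist_def by blast
  moreover have "P x \<sigma> \<le> sum (P x) (perms n)"
    using D s unfolding is_dist_def by (intro member_le_sum finite_perms) auto
  ultimately show ?thesis using D unfolding is_dist_def by simp
qed

lemma exp_Lg: "x \<in> X \<Longrightarrow> \<sigma> \<in> perms n \<Longrightarrow> exp_dist n (P x) \<sigma> = Lg x \<sigma>"
  unfolding Lg_def using exp_dist_Lp dist_X q_X by simp

lemma SI:
  fixes f g :: "'a \<Rightarrow> real"
  assumes "g \<in> borel_measurable \<mu>" "A \<in> sets \<mu>" "\<And>x. x \<in> A \<Longrightarrow> f x = g x"
    "\<And>x. x \<in> A \<Longrightarrow> \<bar>g x\<bar> \<le> K"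
  shows "set_integrable \<mu> A f"
proof -
  have "set_integrable \<mu> A g" unfolding set_integrable_def
  proof (rule integrable_const_bound[where B="\<bar>K\<bar>"])
    have "\<And>x. x \<in> A \<Longrightarrow> \<bar>g x\<bar> \<le> \<bar>K\<bar>" using assms(4) by force
    then show "AE x in \<mu>. norm (indicator A x *\<^sub>R g x) \<le> \<bar>K\<bar>"
      by (intro AE_I2) (auto simp: indicator_def)
    show "(\<lambda>x. indicator A x *\<^sub>R g x) \<in> borel_measurable \<mu>" using assms(1,2) by measurable
  qed
  then show ?thesis using set_integrable_cong[of \<mu> \<mu> A A f g] assms(3) by simp
qed

end

context setting begin

interpretation prob_space \<mu> by (rule ps)

lemma X_space: "X \<subseteq> space \<mu>" using Xm sets.sets_into_space by blast

lemma maj_iff: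
  assumes x: "x \<in> X" and t: "\<tau> \<in> perms n"
  shows "maj n (q x) = \<tau> \<longleftrightarrow> (\<forall>i\<in>{1..n}. \<forall>j\<in>{i<..n}. (\<tau> i < \<tau> j) = (1/2 < q x i j))"
proof
  assume "maj n (q x) = \<tau>"
  then show "\<forall>i\<in>{1..n}. \<forall>j\<in>{i<..n}. (\<tau> i < \<tau> j) = (1/2 < q x i j)"
    using maj_lt[OF goodq[OF x]] by fastforce
next
  assume a: "\<forall>i\<in>{1..n}. \<forall>j\<in>{i<..n}. (\<tau> i < \<tau> j) = (1/2 < q x i j)"
  show "maj n (q x) = \<tau>"
  proof (rule perm_eq_orient[OF maj_perm[OF goodq[OF x]] t])
    fix i j assume ij: "i \<in> {1..n}" "j \<in> {1..n}" "i < j"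
    then have "j \<in> {i<..n}" by auto
    then have "(\<tau> i < \<tau> j) = (1/2 < q x i j)" using a ij(1) by blast
    moreover have "(maj n (q x) i < maj n (q x) j) = (1/2 < q x i j)"
      using maj_lt[OF goodq[OF x] ij(1,2)] ij(3) by simp
    ultimately show "(maj n (q x) i < maj n (q x) j) = (\<tau> i < \<tau> j)" by simp
  qed
qed

definition Cm :: "(nat \<Rightarrow> nat) \<Rightarrow> 'a set" where
  "Cm \<tau> = {x\<in>X. maj n (q x) = \<tau>}"

lemma Cm_meas: assumes t: "\<tau> \<in> perms n" shows "Cm \<tau> \<in> sets \<mu>"
proof -
  have e: "Cm \<tau> = X \<inter> {x\<in>space \<mu>. \<forall>i\<in>{1..n}. \<forall>j\<in>{i<..n}. (\<tau> i < \<tau> j) = (1/2 < q x i j)}"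
    unfolding Cm_def using maj_iff[OF _ t] X_space by blast
  have "{x\<in>space \<mu>. \<forall>i\<in>{1..n}. \<forall>j\<in>{i<..n}. (\<tau> i < \<tau> j) = (1/2 < q x i j)} \<in> sets \<mu>"
    by measurable
  then show ?thesis unfolding e using Xm by blast
qed

definition mg :: "'a \<Rightarrow> real" where
  "mg x = (\<Sum>\<tau>\<in>perms n. indicator (Cm \<tau>) x * Lg x \<tau>)"

lemma mg_meas[measurable]: "mg \<in> borel_measurable \<mu>"
  unfolding mg_def
  by (intro borel_measurable_sum borel_measurable_times borel_measurable_indicator Cm_meas Lg_meas)

lemma mg_X: assumes x: "x \<in> X" shows "mg x = Lg x (maj n (q x))"
proof -
  have mp: "maj n (q x) \<in> perms n" using maj_perm[OF goodq[OF x]] .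
  have "mg x = (\<Sum>\<tau>\<in>perms n. if maj n (q x) = \<tau> then Lg x \<tau> else 0)"
    unfolding mg_def Cm_def using x by (intro sum.cong refl) (auto simp: indicator_def)
  also have "\<dots> = Lg x (maj n (q x))" using mp by (simp add: sum.delta finite_perms)
  finally show ?thesis .
qed

lemma mg_le: "x \<in> X \<Longrightarrow> \<tau> \<in> perms n \<Longrightarrow> mg x \<le> Lg x \<tau>"
  using mg_X Lp_min[OF goodq] unfolding Lg_def by simp

lemma mg_bound: "x \<in> X \<Longrightarrow> \<bar>mg x\<bar> \<le> real n * real n"
  using mg_X Lg_bounds by (metis abs_of_nonneg)

lemma mg_int: "A \<in> sets \<mu> \<Longrightarrow> A \<subseteq> X \<Longrightarrow> set_integrable \<mu> A mg"
  by (rule SI[where g=mg and K="real n * real n"]) (use mg_bound in auto)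

lemma Lg_int: "A \<in> sets \<mu> \<Longrightarrow> set_integrable \<mu> A (\<lambda>x. Lg x \<tau>)"
  by (rule SI[where g="\<lambda>x. Lg x \<tau>" and K="real n * real n"]) (use Lg_bounds in auto)

definition Rg :: "('a \<Rightarrow> nat \<Rightarrow> nat) \<Rightarrow> 'a \<Rightarrow> real" where
  "Rg s x = (\<Sum>\<tau>\<in>perms n. indicator {x\<in>X. s x = \<tau>} x * Lg x \<tau>)"

lemma Rg_meas: "(\<And>\<tau>. {x\<in>X. s x = \<tau>} \<in> sets \<mu>) \<Longrightarrow> Rg s \<in> borel_measurable \<mu>"
  unfolding Rg_def
  by (intro borel_measurable_sum borel_measurable_times borel_measurable_indicator Lg_meas)

lemma Rg_X: assumes x: "x \<in> X" and s: "s x \<in> perms n" shows "Rg s x = Lg x (s x)"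
proof -
  have "Rg s x = (\<Sum>\<tau>\<in>perms n. if s x = \<tau> then Lg x \<tau> else 0)"
    unfolding Rg_def using x by (intro sum.cong refl) (auto simp: indicator_def)
  also have "\<dots> = Lg x (s x)" using s by (simp add: sum.delta finite_perms)
  finally show ?thesis .
qed

lemma risk_integrand: "x \<in> X \<Longrightarrow> s x \<in> perms n \<Longrightarrow>
    (\<Sum>\<sigma>\<in>perms n. P x \<sigma> * kendall n (s x) \<sigma>) = Lg x (s x)"
  using exp_Lg[of x "s x"] unfolding exp_dist_def by (simp add: kendall_sym)

lemma risk_eq: "s \<in> rules n \<mu> X \<Longrightarrow> risk n \<mu> X P s = (LINT x:X|\<mu>. Lg x (s x))"
  unfolding risk_def rules_def using risk_integrand Xm
  by (intro set_lebesgue_integral_cong) auto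

lemma rule_int:
  assumes s: "s \<in> rules n \<mu> X" and A: "A \<in> sets \<mu>" "A \<subseteq> X"
  shows "set_integrable \<mu> A (\<lambda>x. Lg x (s x))"
proof (rule SI[where g="Rg s" and K="real n * real n"])
  show "Rg s \<in> borel_measurable \<mu>" using s unfolding rules_def by (intro Rg_meas) auto
  show "A \<in> sets \<mu>" by fact
  fix x assume "x \<in> A"
  then have x: "x \<in> X" "s x \<in> perms n" using A s unfolding rules_def by auto
  show "Lg x (s x) = Rg s x" using Rg_X[of x s] x by simp
  show "\<bar>Rg s x\<bar> \<le> real n * real n" using Rg_X[of x s] x Lg_bounds by (metis abs_of_nonneg)
qed

lemma rules_ne: "(\<lambda>x. id) \<in> rules n \<mu> X"
proof -
  have "id \<in> perms n" unfolding perms_def by (simp add: permutes_id)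
  moreover have "{x\<in>X. id = \<sigma>} \<in> sets \<mu>" for \<sigma> :: "nat \<Rightarrow> nat"
    by (cases "id = \<sigma>") (auto simp: Xm)
  ultimately show ?thesis unfolding rules_def by auto
qed

lemma risk_nonneg: "s \<in> rules n \<mu> X \<Longrightarrow> 0 \<le> risk n \<mu> X P s"
proof -
  assume s: "s \<in> rules n \<mu> X"
  have "0 \<le> integral\<^sup>L \<mu> (\<lambda>x. indicator X x *\<^sub>R Lg x (s x))"
    by (rule Bochner_Integration.integral_nonneg) (auto simp: Lg_bounds indicator_def)
  then show ?thesis unfolding risk_eq[OF s] set_lebesgue_integral_def .
qed

lemma opt_lower: "(LINT x:X|\<mu>. mg x) \<le> opt_risk n \<mu> X P"
  unfolding opt_risk_def
proof (rule cINF_greatest)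
  show "rules n \<mu> X \<noteq> {}" using rules_ne by blast
  fix s assume s: "s \<in> rules n \<mu> X"
  show "(LINT x:X|\<mu>. mg x) \<le> risk n \<mu> X P s"
    unfolding risk_eq[OF s]
    using s mg_le unfolding rules_def
    by (intro set_integral_mono mg_int rule_int[OF s] Xm) auto
qed

lemma opt_le_risk: "s \<in> rules n \<mu> X \<Longrightarrow> opt_risk n \<mu> X P \<le> risk n \<mu> X P s"
  unfolding opt_risk_def
  by (rule cINF_lower) (auto intro!: bdd_belowI[where m=0] risk_nonneg)

end

lemma term_ineq:
  fixes a b :: real
  shows "(1/2 < b) \<noteq> (1/2 < a) \<Longrightarrow> \<bar>2*a-1\<bar> + \<bar>2*b-1\<bar> \<le> 2*\<bar>a-b\<bar>"
  by (cases "1/2 < a") (auto simp: abs_if)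

context setting begin

interpretation prob_space \<mu> by (rule ps)

definition S2 :: "'a \<Rightarrow> 'a \<Rightarrow> real" where
  "S2 x y = (\<Sum>i\<in>{1..n}. \<Sum>j\<in>{i<..n}. \<bar>q x i j - q y i j\<bar>)"

lemma Ldiff_maj:
  assumes x: "x \<in> X" and y: "y \<in> X"
  shows "Lg x (maj n (q y)) - mg x =
     (\<Sum>i\<in>{1..n}. \<Sum>j\<in>{i<..n}. if (1/2 < q y i j) \<noteq> (1/2 < q x i j) then \<bar>2 * q x i j - 1\<bar> else 0)"
proof -
  have "Lg x (maj n (q y)) - mg x = Lp n (q x) (maj n (q y)) - Lp n (q x) (maj n (q x))"
    unfolding mg_X[OF x] Lg_def by simp
  also have "\<dots> = (\<Sum>i\<in>{1..n}. \<Sum>j\<in>{i<..n}. if (maj n (q y) i < maj n (q y) j) \<noteq> (1/2 < q x i j) then \<bar>2 * q x i j - 1\<bar> else 0)"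
    by (rule Lp_diff[OF goodq[OF x] maj_perm[OF goodq[OF y]]])
  also have "\<dots> = (\<Sum>i\<in>{1..n}. \<Sum>j\<in>{i<..n}. if (1/2 < q y i j) \<noteq> (1/2 < q x i j) then \<bar>2 * q x i j - 1\<bar> else 0)"
  proof (intro sum.cong refl)
    fix i j assume ij: "i \<in> {1..n}" "j \<in> {i<..n}"
    then have "j \<in> {1..n}" "i \<noteq> j" by auto
    then have "(maj n (q y) i < maj n (q y) j) = (1/2 < q y i j)" using maj_lt[OF goodq[OF y] ij(1)] by simp
    then show "(if (maj n (q y) i < maj n (q y) j) \<noteq> (1/2 < q x i j) then \<bar>2 * q x i j - 1\<bar> else 0) =
      (if (1/2 < q y i j) \<noteq> (1/2 < q x i j) then \<bar>2 * q x i j - 1\<bar> else 0)" by simp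
  qed
  finally show ?thesis .
qed

lemma PW:
  assumes x: "x \<in> X" and y: "y \<in> X"
  shows "(Lg x (maj n (q y)) - mg x) + (Lg y (maj n (q x)) - mg y) \<le> 2 * S2 x y"
proof -
  have "(Lg x (maj n (q y)) - mg x) + (Lg y (maj n (q x)) - mg y) =
    (\<Sum>i\<in>{1..n}. \<Sum>j\<in>{i<..n}. (if (1/2 < q y i j) \<noteq> (1/2 < q x i j) then \<bar>2 * q x i j - 1\<bar> else 0)
        + (if (1/2 < q x i j) \<noteq> (1/2 < q y i j) then \<bar>2 * q y i j - 1\<bar> else 0))"
    unfolding Ldiff_maj[OF x y] Ldiff_maj[OF y x] by (simp add: sum.distrib)
  also have "\<dots> \<le> (\<Sum>i\<in>{1..n}. \<Sum>j\<in>{i<..n}. 2 * \<bar>q x i j - q y i j\<bar>)"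
    by (intro sum_mono) (auto simp: term_ineq)
  also have "\<dots> = 2 * S2 x y" unfolding S2_def by (simp add: sum_distrib_left)
  finally show ?thesis .
qed

lemma const_int: "A \<in> sets \<mu> \<Longrightarrow> set_integrable \<mu> A (\<lambda>x. c::real)"
  by (rule SI[where g="\<lambda>x. c" and K="\<bar>c\<bar>"]) auto

lemma set_int_const: "A \<in> sets \<mu> \<Longrightarrow> (LINT x:A|\<mu>. (c::real)) = measure \<mu> A * c"
  by (simp add: set_integral_const emeasure_eq_measure)

lemma cell_avg:
  assumes Cs: "C \<in> sets \<mu>" and CX: "C \<subseteq> X" and Cp: "measure \<mu> C > 0"
    and Bd: "\<forall>x\<in>C. \<forall>y\<in>C. S2 x y \<le> B"
  shows "\<exists>\<tau>\<in>perms n. (LINT x:C|\<mu>. Lg x \<tau>) \<le> (LINT x:C|\<mu>. mg x) + B * measure \<mu> C"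
proof -
  define Ct where "Ct \<tau> = C \<inter> Cm \<tau>" for \<tau>
  define w where "w \<tau> = measure \<mu> (Ct \<tau>)" for \<tau>
  define f where "f \<tau> x = Lg x \<tau> - mg x" for \<tau> x
  have Ct_meas: "\<tau> \<in> perms n \<Longrightarrow> Ct \<tau> \<in> sets \<mu>" for \<tau> unfolding Ct_def using Cm_meas Cs by blast
  have Ct_sub: "Ct \<tau> \<subseteq> X" for \<tau> unfolding Ct_def using CX by blast
  have f_int: "A \<in> sets \<mu> \<Longrightarrow> A \<subseteq> X \<Longrightarrow> set_integrable \<mu> A (f \<tau>)" for A \<tau>
    unfolding f_def by (intro set_integral_diff(1) Lg_int mg_int)
  have part: "indicator C x = (\<Sum>\<tau>\<in>perms n. indicator (Ct \<tau> ) x :: real)" for x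
  proof (cases "x \<in> C")
    case True
    then have x: "x \<in> X" using CX by blast
    have mp: "maj n (q x) \<in> perms n" using maj_perm[OF goodq[OF x]] .
    have "(\<Sum>\<tau>\<in>perms n. indicator (Ct \<tau>) x :: real) = (\<Sum>\<tau>\<in>perms n. if maj n (q x) = \<tau> then 1 else 0)"
      unfolding Ct_def Cm_def using True x by (intro sum.cong refl) (auto simp: indicator_def)
    also have "\<dots> = 1" using mp by (simp add: sum.delta finite_perms)
    finally show ?thesis using True by simp
  next
    case False then show ?thesis unfolding Ct_def by (simp add: indicator_def)
  qed
  have i_split: "(LINT x:C|\<mu>. f \<tau> x) = (\<Sum>\<tau>'\<in>perms n. LINT x:Ct \<tau>'|\<mu>. f \<tau> x)" for \<tau>
    by (rule set_integral_partition[OF finite_perms part]) (intro f_int Ct_meas Ct_sub)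
  have wsum: "measure \<mu> C = (\<Sum>\<tau>\<in>perms n. w \<tau>)"
  proof -
    have "(LINT x:C|\<mu>. (1::real)) = (\<Sum>\<tau>'\<in>perms n. LINT x:Ct \<tau>'|\<mu>. (1::real))"
      by (rule set_integral_partition[OF finite_perms part]) (intro const_int Ct_meas)
    then show ?thesis unfolding w_def using set_int_const Cs Ct_meas by simp
  qed
  have w_nn: "0 \<le> w \<tau>" for \<tau> unfolding w_def by simp
  have pair: "w \<tau> * (LINT x:Ct \<tau>'|\<mu>. f \<tau> x) + w \<tau>' * (LINT x:Ct \<tau>|\<mu>. f \<tau>' x) \<le> 2 * B * w \<tau> * w \<tau>'"
    if t: "\<tau> \<in> perms n" "\<tau>' \<in> perms n" for \<tau> \<tau>'
  proof -
    define I where "I = (LINT x:Ct \<tau>'|\<mu>. f \<tau> x)"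
    have h1: "w \<tau>' * f \<tau>' y \<le> 2 * B * w \<tau>' - I" if y: "y \<in> Ct \<tau>" for y
    proof -
      have "I \<le> (LINT x:Ct \<tau>'|\<mu>. 2 * B - f \<tau>' y)" unfolding I_def
      proof (rule set_integral_mono)
        show "set_integrable \<mu> (Ct \<tau>') (f \<tau>)" by (intro f_int Ct_meas t Ct_sub)
        show "set_integrable \<mu> (Ct \<tau>') (\<lambda>x. 2 * B - f \<tau>' y)" by (intro const_int Ct_meas t)
        fix x assume x: "x \<in> Ct \<tau>'"
        have xX: "x \<in> X" "y \<in> X" "x \<in> C" "y \<in> C" using x y unfolding Ct_def Cm_def using CX by auto
        have "maj n (q x) = \<tau>'" "maj n (q y) = \<tau>" using x y unfolding Ct_def Cm_def by auto
        then have "f \<tau> x + f \<tau>' y \<le> 2 * S2 x y" unfolding f_def using PW[OF xX(1,2)] by simp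
        also have "\<dots> \<le> 2 * B" using Bd xX by auto
        finally show "f \<tau> x \<le> 2 * B - f \<tau>' y" by simp
      qed
      also have "\<dots> = w \<tau>' * (2 * B - f \<tau>' y)" unfolding w_def using set_int_const Ct_meas t by simp
      finally show ?thesis by (simp add: algebra_simps)
    qed
    have "(LINT y:Ct \<tau>|\<mu>. w \<tau>' * f \<tau>' y) \<le> (LINT y:Ct \<tau>|\<mu>. 2 * B * w \<tau>' - I)"
    proof (rule set_integral_mono)
      show "set_integrable \<mu> (Ct \<tau>) (\<lambda>y. w \<tau>' * f \<tau>' y)"
        by (intro set_integrable_mult_right f_int Ct_meas t Ct_sub)
      show "set_integrable \<mu> (Ct \<tau>) (\<lambda>y. 2 * B * w \<tau>' - I)" by (intro const_int Ct_meas t)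
    qed (rule h1)
    also have "\<dots> = w \<tau> * (2 * B * w \<tau>' - I)" unfolding w_def using set_int_const Ct_meas t by simp
    finally have "w \<tau>' * (LINT y:Ct \<tau>|\<mu>. f \<tau>' y) \<le> w \<tau> * (2 * B * w \<tau>' - I)" by simp
    then show ?thesis unfolding I_def by (simp add: algebra_simps)
  qed
  define a where "a \<tau> \<tau>' = w \<tau> * (LINT x:Ct \<tau>'|\<mu>. f \<tau> x)" for \<tau> \<tau>'
  define S where "S = (\<Sum>\<tau>\<in>perms n. \<Sum>\<tau>'\<in>perms n. a \<tau> \<tau>')"
  have "2 * S = (\<Sum>\<tau>\<in>perms n. \<Sum>\<tau>'\<in>perms n. a \<tau> \<tau>') + (\<Sum>\<tau>\<in>perms n. \<Sum>\<tau>'\<in>perms n. a \<tau>' \<tau>)"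
    unfolding S_def by (subst (2) sum.swap) simp
  also have "\<dots> = (\<Sum>\<tau>\<in>perms n. \<Sum>\<tau>'\<in>perms n. a \<tau> \<tau>' + a \<tau>' \<tau>)" by (simp add: sum.distrib)
  also have "\<dots> \<le> (\<Sum>\<tau>\<in>perms n. \<Sum>\<tau>'\<in>perms n. 2 * B * w \<tau> * w \<tau>')"
    unfolding a_def by (intro sum_mono pair)
  also have "\<dots> = 2 * B * ((\<Sum>\<tau>\<in>perms n. w \<tau>) * (\<Sum>\<tau>\<in>perms n. w \<tau>))"
  proof -
    have "(\<Sum>\<tau>\<in>perms n. w \<tau>) * (\<Sum>\<tau>\<in>perms n. w \<tau>) = (\<Sum>\<tau>\<in>perms n. \<Sum>\<tau>'\<in>perms n. w \<tau> * w \<tau>')"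
      by (rule sum_product)
    then show ?thesis by (simp only: sum_distrib_left mult.assoc)
  qed
  finally have S_le: "S \<le> B * measure \<mu> C * measure \<mu> C" using wsum by (simp add: mult.assoc)
  have S_eq: "S = (\<Sum>\<tau>\<in>perms n. w \<tau> * (LINT x:C|\<mu>. f \<tau> x))"
    unfolding S_def a_def i_split by (simp add: sum_distrib_left)
  show ?thesis
  proof (rule ccontr)
    assume "\<not> ?thesis"
    then have gt: "\<tau> \<in> perms n \<Longrightarrow> (LINT x:C|\<mu>. f \<tau> x) > B * measure \<mu> C" for \<tau>
      unfolding f_def using set_integral_diff(2)[OF Lg_int mg_int] Cs CX by fastforce
    obtain \<tau>0 where t0: "\<tau>0 \<in> perms n" "w \<tau>0 > 0"
    proof (rule ccontr)
      assume "\<not> thesis"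
      then have "\<forall>\<tau>\<in>perms n. w \<tau> \<le> 0" using that by fastforce
      then have "(\<Sum>\<tau>\<in>perms n. w \<tau>) \<le> 0" by (intro sum_nonpos) auto
      then show False using wsum Cp by simp
    qed
    have "0 < w \<tau>0 * ((LINT x:C|\<mu>. f \<tau>0 x) - B * measure \<mu> C)" using t0 gt[OF t0(1)] by simp
    also have "\<dots> \<le> (\<Sum>\<tau>\<in>perms n. w \<tau> * ((LINT x:C|\<mu>. f \<tau> x) - B * measure \<mu> C))"
    proof (rule member_le_sum[OF t0(1) _ finite_perms])
      fix \<tau> assume "\<tau> \<in> perms n - {\<tau>0}"
      then have "0 \<le> (LINT x:C|\<mu>. f \<tau> x) - B * measure \<mu> C" using gt[of \<tau>] by simp
      then show "0 \<le> w \<tau> * ((LINT x:C|\<mu>. f \<tau> x) - B * measure \<mu> C)" using w_nn by simp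
    qed
    also have "\<dots> = S - B * measure \<mu> C * (\<Sum>\<tau>\<in>perms n. w \<tau>)"
      unfolding S_eq by (simp add: algebra_simps sum_subtractf sum_distrib_left)
    finally show False using S_le wsum by simp
  qed
qed

end

lemma cell_of_eq:
  assumes "is_partition \<mu> X PP" "C \<in> PP" "x \<in> C"
  shows "cell_of PP x = C"
  unfolding cell_of_def
proof (rule the_equality)
  show "C \<in> PP \<and> x \<in> C" using assms by simp
  fix C' assume a: "C' \<in> PP \<and> x \<in> C'"
  have d: "\<forall>C\<in>PP. \<forall>C'\<in>PP. C \<noteq> C' \<longrightarrow> C \<inter> C' = {}" using assms(1) unfolding is_partition_def by blast
  show "C' = C"
  proof (rule ccontr)
    assume "C' \<noteq> C"
    then have "C' \<inter> C = {}" using d a assms(2) by blast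
    then show False using a assms(3) by blast
  qed
qed

lemma cell_of_in:
  assumes "is_partition \<mu> X PP" "x \<in> X"
  shows "cell_of PP x \<in> PP \<and> x \<in> cell_of PP x"
proof -
  have "\<Union>PP = X" using assms(1) unfolding is_partition_def by blast
  then obtain C where "C \<in> PP" "x \<in> C" using assms(2) by blast
  then show ?thesis using cell_of_eq[OF assms(1)] by simp
qed

lemma part_indicator:
  assumes p: "is_partition \<mu> X PP"
  shows "indicator X x = (\<Sum>C\<in>PP. indicator C x :: real)"
proof (cases "x \<in> X")
  case True
  let ?C0 = "cell_of PP x"
  have c0: "?C0 \<in> PP" "x \<in> ?C0" using cell_of_in[OF p True] by auto
  have "(\<Sum>C\<in>PP. indicator C x :: real) = (\<Sum>C\<in>PP. if ?C0 = C then 1 else 0)"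
  proof (intro sum.cong refl)
    fix C assume C: "C \<in> PP"
    have "x \<in> C \<longleftrightarrow> ?C0 = C"
    proof
      assume "x \<in> C" then show "?C0 = C" using cell_of_eq[OF p C] by blast
    next
      assume "?C0 = C" then show "x \<in> C" using c0 by blast
    qed
    then show "indicator C x = (if ?C0 = C then 1 else (0::real))" by (simp add: indicator_def)
  qed
  also have "\<dots> = 1" using c0 p unfolding is_partition_def by (simp add: sum.delta)
  finally show ?thesis using True by simp
next
  case False
  have u: "\<Union>PP = X" using p unfolding is_partition_def by blast
  have "C \<subseteq> X" if "C \<in> PP" for C using u that by blast
  then have "(\<Sum>C\<in>PP. indicator C x :: real) = 0" using False by (intro sum.neutral) (auto simp: indicator_def)
  then show ?thesis using False by simp
qed

lemma norm_nonneg':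
  assumes "is_norm N" shows "0 \<le> N x"
proof -
  have z: "N 0 = 0" using assms unfolding is_norm_def by blast
  have "N ((-1) *\<^sub>R x) = \<bar>-1\<bar> * N x" using assms unfolding is_norm_def by blast
  then have "N (-x) = N x" by simp
  moreover have "N (x + -x) \<le> N x + N (-x)" using assms unfolding is_norm_def by blast
  ultimately show ?thesis using z by simp
qed

lemma norm_zero': "is_norm N \<Longrightarrow> N 0 = 0"
  unfolding is_norm_def by blast

lemma norm_eq0: "is_norm N \<Longrightarrow> N x = 0 \<Longrightarrow> x = 0"
  unfolding is_norm_def by blast

lemma part_U: "is_partition \<mu> X PP \<Longrightarrow> \<Union>PP = X" by (simp add: is_partition_def)
lemma part_fin: "is_partition \<mu> X PP \<Longrightarrow> finite PP" by (simp add: is_partition_def)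
lemma part_sub: "is_partition \<mu> X PP \<Longrightarrow> C \<in> PP \<Longrightarrow> C \<subseteq> X"
  using part_U by blast
lemma part_sets: "is_partition \<mu> X PP \<Longrightarrow> C \<in> PP \<Longrightarrow> C \<in> sets \<mu>" by (simp add: is_partition_def)
lemma part_pos: "is_partition \<mu> X PP \<Longrightarrow> C \<in> PP \<Longrightarrow> measure \<mu> C > 0" by (simp add: is_partition_def)

context setting begin

interpretation prob_space \<mu> by (rule ps)

lemma S2_bounds: "0 \<le> S2 x y" "S2 x y \<le> real n * real n"
proof -
  show "0 \<le> S2 x y" unfolding S2_def by (intro sum_nonneg) auto
  have "S2 x y \<le> (\<Sum>i\<in>{1..n}. \<Sum>j\<in>{i<..n}. (1::real))" unfolding S2_def
  proof (intro sum_mono)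
    fix i j show "\<bar>q x i j - q y i j\<bar> \<le> 1" using q_bounds[of x i j] q_bounds[of y i j] by (simp add: abs_le_iff)
  qed
  also have "\<dots> \<le> (\<Sum>i\<in>{1..n}. real n)" by (intro sum_mono) auto
  also have "\<dots> = real n * real n" by simp
  finally show "S2 x y \<le> real n * real n" .
qed

lemma part1:
  assumes p: "is_partition \<mu> X PP" and Bd: "\<forall>C\<in>PP. \<forall>x\<in>C. \<forall>y\<in>C. S2 x y \<le> B"
    and s: "s \<in> opt_piecewise n \<mu> X P PP"
  shows "risk n \<mu> X P s - opt_risk n \<mu> X P \<le> B"
proof -
  have CX: "C \<subseteq> X" if "C \<in> PP" for C using part_sub[OF p that] .
  have Cs: "C \<in> sets \<mu>" "measure \<mu> C > 0" if "C \<in> PP" for C using part_sets[OF p that] part_pos[OF p that] by auto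
  have fin: "finite PP" using part_fin[OF p] .
  have "\<forall>C\<in>PP. \<exists>\<tau>. \<tau> \<in> perms n \<and> (LINT x:C|\<mu>. Lg x \<tau>) \<le> (LINT x:C|\<mu>. mg x) + B * measure \<mu> C"
  proof
    fix C assume C: "C \<in> PP"
    have "\<forall>x\<in>C. \<forall>y\<in>C. S2 x y \<le> B" using Bd C by blast
    from cell_avg[OF Cs(1)[OF C] CX[OF C] Cs(2)[OF C] this]
    show "\<exists>\<tau>. \<tau> \<in> perms n \<and> (LINT x:C|\<mu>. Lg x \<tau>) \<le> (LINT x:C|\<mu>. mg x) + B * measure \<mu> C" by blast
  qed
  then obtain tc where tc: "\<forall>C\<in>PP. tc C \<in> perms n \<and>
      (LINT x:C|\<mu>. Lg x (tc C)) \<le> (LINT x:C|\<mu>. mg x) + B * measure \<mu> C"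
    by (rule bchoice[THEN exE]) blast
  define s' where "s' x = tc (cell_of PP x)" for x
  have s'C: "s' x = tc C" if "C \<in> PP" "x \<in> C" for C x
    unfolding s'_def using cell_of_eq[OF p that] by simp
  have s'r: "s' \<in> rules n \<mu> X" unfolding rules_def
  proof (intro CollectI conjI allI ballI)
    fix x assume "x \<in> X"
    then have "cell_of PP x \<in> PP" using cell_of_in[OF p] by blast
    then show "s' x \<in> perms n" unfolding s'_def using tc by blast
  next
    fix \<sigma>
    have "{x\<in>X. s' x = \<sigma>} = \<Union>{C\<in>PP. tc C = \<sigma>}"
    proof
      show "{x\<in>X. s' x = \<sigma>} \<subseteq> \<Union>{C\<in>PP. tc C = \<sigma>}"
      proof
        fix x assume x: "x \<in> {x\<in>X. s' x = \<sigma>}"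
        then have "cell_of PP x \<in> PP" "x \<in> cell_of PP x" using cell_of_in[OF p] by auto
        then show "x \<in> \<Union>{C\<in>PP. tc C = \<sigma>}" using x unfolding s'_def by blast
      qed
      show "\<Union>{C\<in>PP. tc C = \<sigma>} \<subseteq> {x\<in>X. s' x = \<sigma>}"
      proof
        fix x assume "x \<in> \<Union>{C\<in>PP. tc C = \<sigma>}"
        then obtain C where C: "C \<in> PP" "tc C = \<sigma>" "x \<in> C" by blast
        then show "x \<in> {x\<in>X. s' x = \<sigma>}" using s'C[OF C(1,3)] CX[OF C(1)] by blast
      qed
    qed
    moreover have "\<Union>{C\<in>PP. tc C = \<sigma>} \<in> sets \<mu>" using fin Cs by (intro sets.finite_Union) auto
    ultimately show "{x\<in>X. s' x = \<sigma>} \<in> sets \<mu>" by simp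
  qed
  have s'p: "s' \<in> piecewise_rules n \<mu> X PP" unfolding piecewise_rules_def
  proof (intro CollectI conjI ballI s'r)
    fix C x x' assume "C \<in> PP" "x \<in> C" "x' \<in> C"
    then show "s' x = s' x'" using s'C by simp
  qed
  have "risk n \<mu> X P s \<le> risk n \<mu> X P s'" using s s'p unfolding opt_piecewise_def by blast
  also have "\<dots> = (LINT x:X|\<mu>. Lg x (s' x))" using risk_eq[OF s'r] .
  also have "\<dots> = (\<Sum>C\<in>PP. LINT x:C|\<mu>. Lg x (s' x))"
    by (rule set_integral_partition[OF fin part_indicator[OF p]]) (intro rule_int[OF s'r] Cs CX)
  also have "\<dots> = (\<Sum>C\<in>PP. LINT x:C|\<mu>. Lg x (tc C))"
  proof (intro sum.cong refl set_lebesgue_integral_cong)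
    fix C assume C: "C \<in> PP"
    show "C \<in> sets \<mu>" using Cs(1)[OF C] .
    show "\<forall>x. x \<in> C \<longrightarrow> Lg x (s' x) = Lg x (tc C)" using s'C[OF C] by simp
  qed
  also have "\<dots> \<le> (\<Sum>C\<in>PP. (LINT x:C|\<mu>. mg x) + B * measure \<mu> C)"
  proof (intro sum_mono)
    fix C assume "C \<in> PP" then show "(LINT x:C|\<mu>. Lg x (tc C)) \<le> (LINT x:C|\<mu>. mg x) + B * measure \<mu> C" using tc by blast
  qed
  also have "\<dots> = (\<Sum>C\<in>PP. LINT x:C|\<mu>. mg x) + B * (\<Sum>C\<in>PP. measure \<mu> C)"
    by (simp add: sum.distrib sum_distrib_left)
  also have "(\<Sum>C\<in>PP. LINT x:C|\<mu>. mg x) = (LINT x:X|\<mu>. mg x)"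
    by (rule set_integral_partition[OF fin part_indicator[OF p], symmetric]) (intro mg_int Cs CX)
  also have "(\<Sum>C\<in>PP. measure \<mu> C) = 1"
  proof -
    have "(LINT x:X|\<mu>. (1::real)) = (\<Sum>C\<in>PP. LINT x:C|\<mu>. (1::real))"
      by (rule set_integral_partition[OF fin part_indicator[OF p]]) (intro const_int Cs)
    moreover have "measure \<mu> X = 1" using X1 by (simp add: emeasure_eq_measure)
    ultimately show ?thesis using set_int_const Cs Xm by simp
  qed
  finally have "risk n \<mu> X P s \<le> (LINT x:X|\<mu>. mg x) + B" by simp
  then show ?thesis using opt_lower by simp
qed

end

lemma diam_ge:
  fixes N :: "'b::real_normed_vector \<Rightarrow> real"
  assumes p: "is_partition \<mu> X PP" and C: "C \<in> PP" and x: "x \<in> C" and y: "y \<in> C"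
  shows "ereal (N (x - y)) \<le> diam_part N PP"
proof -
  have "ereal (N (x - y)) \<le> (SUP x'\<in>C. ereal (N (x - x')))" using y by (rule SUP_upper)
  also have "\<dots> \<le> (SUP x\<in>C. SUP x'\<in>C. ereal (N (x - x')))" using x by (rule SUP_upper)
  also have "\<dots> \<le> diam_part N PP" unfolding diam_part_def
    using part_fin[OF p] C by (intro Max_ge) auto
  finally show ?thesis .
qed

lemma B_exists:
  fixes N :: "'b::real_normed_vector \<Rightarrow> real" and \<mu> :: "'b measure"
  assumes st: "setting n \<mu> X P"
  assumes p: "is_partition \<mu> X PP" and nrm: "is_norm N"
    and lip: "\<forall>x\<in>X. \<forall>x'\<in>X. setting.S2 n X P x x' \<le> M * N (x - x')"
  shows "\<exists>B\<ge>0. (\<forall>C\<in>PP. \<forall>x\<in>C. \<forall>y\<in>C. setting.S2 n X P x y \<le> B) \<and> ereal B \<le> ereal M * diam_part N PP"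
proof -
  interpret setting n \<mu> X P by (rule st)
  have X_ne: "X \<noteq> {}" using X1 by auto
  have CX: "C \<subseteq> X" if "C \<in> PP" for C using part_sub[OF p that] .
  obtain x0 where x0: "x0 \<in> X" using X_ne by blast
  obtain C0 where C0: "C0 \<in> PP" "x0 \<in> C0" using x0 part_U[OF p] by blast
  have d0: "0 \<le> diam_part N PP" using diam_ge[where N=N, OF p C0(1) C0(2) C0(2)] norm_zero'[OF nrm] by (simp add: zero_ereal_def)
  consider "M < 0" | "M = 0" | "M > 0" by linarith
  then show ?thesis
  proof cases
    case 1
    have N0: "N (x - y) = 0" if "x \<in> X" "y \<in> X" for x y
    proof -
      have "0 \<le> S2 x y" by (rule S2_bounds(1))
      also have "S2 x y \<le> M * N (x - y)" using lip that by blast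
      finally have "0 \<le> M * N (x - y)" .
      then have "N (x - y) \<le> 0" using 1 by (simp add: mult_le_0_iff zero_le_mult_iff)
      then show ?thesis using norm_nonneg'[OF nrm] by (simp add: order_antisym)
    qed
    have "diam_part N PP \<le> 0" unfolding diam_part_def
    proof (rule Max.boundedI)
      show "finite ((\<lambda>C. SUP x\<in>C. SUP x'\<in>C. ereal (N (x - x'))) ` PP)" using part_fin[OF p] by simp
      show "(\<lambda>C. SUP x\<in>C. SUP x'\<in>C. ereal (N (x - x'))) ` PP \<noteq> {}" using C0 by blast
      fix a assume "a \<in> (\<lambda>C. SUP x\<in>C. SUP x'\<in>C. ereal (N (x - x'))) ` PP"
      then obtain C where C: "C \<in> PP" "a = (SUP x\<in>C. SUP x'\<in>C. ereal (N (x - x')))" by blast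
      have "(SUP x\<in>C. SUP x'\<in>C. ereal (N (x - x'))) \<le> 0"
      proof (intro SUP_least)
        fix x x' assume "x \<in> C" "x' \<in> C"
        then have "N (x - x') = 0" using N0 CX[OF C(1)] by blast
        then show "ereal (N (x - x')) \<le> 0" by (simp add: zero_ereal_def)
      qed
      then show "a \<le> 0" using C by simp
    qed
    then have "diam_part N PP = 0" using d0 by simp
    moreover have "S2 x y \<le> 0" if "x \<in> X" "y \<in> X" for x y
    proof -
      have "S2 x y \<le> M * N (x - y)" using lip that by blast
      then show ?thesis using N0[OF that] by simp
    qed
    ultimately show ?thesis using CX by (intro exI[of _ 0]) (auto simp: zero_ereal_def[symmetric])
  next
    case 2
    have "S2 x y \<le> 0" if "x \<in> X" "y \<in> X" for x y
    proof -
      have "S2 x y \<le> M * N (x - y)" using lip that by blast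
      then show ?thesis using 2 by simp
    qed
    then show ?thesis using CX 2 by (intro exI[of _ 0]) (auto simp: zero_ereal_def[symmetric])
  next
    case 3
    show ?thesis
    proof (cases "diam_part N PP = \<infinity>")
      case True
      then have "ereal M * diam_part N PP = \<infinity>" using 3 by simp
      then show ?thesis using S2_bounds by (intro exI[of _ "real n * real n"]) auto
    next
      case False
      then obtain d where d: "diam_part N PP = ereal d" using d0 by (cases "diam_part N PP") auto
      have "S2 x y \<le> M * d" if C: "C \<in> PP" and xy: "x \<in> C" "y \<in> C" for C x y
      proof -
        have "N (x - y) \<le> d" using diam_ge[where N=N, OF p C xy] d by simp
        then have "M * N (x - y) \<le> M * d" using 3 by simp
        moreover have "S2 x y \<le> M * N (x - y)" using lip CX[OF C] xy by blast
        ultimately show ?thesis by simp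
      qed
      moreover have "0 \<le> M * d" using d0 d 3 by simp
      ultimately show ?thesis using d by (intro exI[of _ "M * d"]) auto
    qed
  qed
qed

lemma set_integral_sum':
  fixes f :: "'i \<Rightarrow> 'a \<Rightarrow> real"
  assumes "finite I" "\<And>i. i \<in> I \<Longrightarrow> set_integrable M A (f i)"
  shows "(LINT x:A|M. (\<Sum>i\<in>I. f i x)) = (\<Sum>i\<in>I. LINT x:A|M. f i x)"
proof -
  have "(\<lambda>x. indicator A x *\<^sub>R (\<Sum>i\<in>I. f i x)) = (\<lambda>x. \<Sum>i\<in>I. indicator A x *\<^sub>R f i x)"
    by (simp add: sum_distrib_left)
  then show ?thesis unfolding set_lebesgue_integral_def
    using assms(2) unfolding set_integrable_def by (simp add: integral_sum)
qed

lemma set_integrable_sum':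
  fixes f :: "'i \<Rightarrow> 'a \<Rightarrow> real"
  assumes "finite I" "\<And>i. i \<in> I \<Longrightarrow> set_integrable M A (f i)"
  shows "set_integrable M A (\<lambda>x. \<Sum>i\<in>I. f i x)"
proof -
  have "(\<lambda>x. indicator A x *\<^sub>R (\<Sum>i\<in>I. f i x)) = (\<lambda>x. \<Sum>i\<in>I. indicator A x *\<^sub>R f i x)"
    by (simp add: sum_distrib_left)
  then show ?thesis
    using assms(2) unfolding set_integrable_def by (simp add: integrable_sum)
qed

context setting begin

interpretation prob_space \<mu> by (rule ps)

lemma cond_q:
  assumes Cs: "C \<in> sets \<mu>" and CX: "C \<subseteq> X"
  shows "pprob n (cond_cell \<mu> P C) i j = (LINT y:C|\<mu>. q y i j) / measure \<mu> C"
proof -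
  let ?S = "{\<sigma>\<in>perms n. \<sigma> i < \<sigma> j}"
  have fS: "finite ?S" using finite_perms by simp
  have int: "set_integrable \<mu> C (\<lambda>y. Pg y \<sigma>)" if "\<sigma> \<in> ?S" for \<sigma>
  proof (rule SI[where g="\<lambda>y. Pg y \<sigma>" and K=1])
    fix y assume "y \<in> C"
    then have "y \<in> X" using CX by blast
    then show "\<bar>Pg y \<sigma>\<bar> \<le> 1" using P_bounds[of y \<sigma>] that Pg_X by simp
  qed (use Cs in auto)
  have "pprob n (cond_cell \<mu> P C) i j = (\<Sum>\<sigma>\<in>?S. (LINT y:C|\<mu>. P y \<sigma>)) / measure \<mu> C"
    unfolding pprob_def cond_cell_def by (simp add: sum_divide_distrib)
  also have "(\<Sum>\<sigma>\<in>?S. (LINT y:C|\<mu>. P y \<sigma>)) = (\<Sum>\<sigma>\<in>?S. (LINT y:C|\<mu>. Pg y \<sigma>))"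
  proof (intro sum.cong refl set_lebesgue_integral_cong Cs allI impI)
    fix \<sigma> y assume "y \<in> C" then show "P y \<sigma> = Pg y \<sigma>" using CX Pg_X by auto
  qed
  also have "\<dots> = (LINT y:C|\<mu>. (\<Sum>\<sigma>\<in>?S. Pg y \<sigma>))"
    by (rule set_integral_sum'[symmetric, OF fS int])
  also have "\<dots> = (LINT y:C|\<mu>. q y i j)" unfolding q_def pprob_def by simp
  finally show ?thesis .
qed

lemma S2_meas[measurable]: "(\<lambda>y. S2 x y) \<in> borel_measurable \<mu>"
  unfolding S2_def by measurable

lemma qdiff_le: "\<bar>q x i j - q y i j\<bar> \<le> 1"
  using q_bounds[of x i j] q_bounds[of y i j] by (simp add: abs_le_iff)

lemma qdiff_int: "A \<in> sets \<mu> \<Longrightarrow> set_integrable \<mu> A (\<lambda>y. \<bar>q x i j - q y i j\<bar>)"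
  by (rule SI[where g="\<lambda>y. \<bar>q x i j - q y i j\<bar>" and K=1]) (auto simp: qdiff_le)

lemma qdiff_int': "A \<in> sets \<mu> \<Longrightarrow> set_integrable \<mu> A (\<lambda>y. q x i j - q y i j)"
  by (rule SI[where g="\<lambda>y. q x i j - q y i j" and K=1]) (auto simp: qdiff_le)

lemma qdiff_int'': "A \<in> sets \<mu> \<Longrightarrow> set_integrable \<mu> A (\<lambda>y. - (q x i j - q y i j))"
  by (rule SI[where g="\<lambda>y. - (q x i j - q y i j)" and K=1]) (auto simp: qdiff_le)

lemma q_cell_bound:
  assumes Cs: "C \<in> sets \<mu>" and CX: "C \<subseteq> X" and Cp: "measure \<mu> C > 0"
    and Bd: "\<forall>y\<in>C. S2 x y \<le> B"
  shows "(\<Sum>i\<in>{1..n}. \<Sum>j\<in>{i<..n}. \<bar>q x i j - (LINT y:C|\<mu>. q y i j) / measure \<mu> C\<bar>) \<le> B"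
proof -
  let ?m = "measure \<mu> C"
  have qint: "set_integrable \<mu> C (\<lambda>y. q y i j)" for i j
  proof (rule SI[where g="\<lambda>y. q y i j" and K=1])
    fix y show "\<bar>q y i j\<bar> \<le> 1" using q_bounds[of y i j] by simp
  qed (use Cs in auto)
  have each: "\<bar>q x i j - (LINT y:C|\<mu>. q y i j) / ?m\<bar> \<le> (LINT y:C|\<mu>. \<bar>q x i j - q y i j\<bar>) / ?m" for i j
  proof -
    have c: "(LINT y:C|\<mu>. q x i j) = ?m * q x i j" using set_int_const[OF Cs, of "q x i j"] .
    have "((LINT y:C|\<mu>. q x i j) - (LINT y:C|\<mu>. q y i j)) / ?m = (LINT y:C|\<mu>. q x i j) / ?m - (LINT y:C|\<mu>. q y i j) / ?m"
      by (rule diff_divide_distrib)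
    also have "(LINT y:C|\<mu>. q x i j) / ?m = q x i j" unfolding c using Cp by simp
    finally have "q x i j - (LINT y:C|\<mu>. q y i j) / ?m = ((LINT y:C|\<mu>. q x i j) - (LINT y:C|\<mu>. q y i j)) / ?m" by simp
    also have "\<dots> = (LINT y:C|\<mu>. q x i j - q y i j) / ?m"
      using set_integral_diff(2)[OF const_int[OF Cs] qint] by simp
    finally have e: "q x i j - (LINT y:C|\<mu>. q y i j) / ?m = (LINT y:C|\<mu>. q x i j - q y i j) / ?m" .
    have "(LINT y:C|\<mu>. q x i j - q y i j) \<le> (LINT y:C|\<mu>. \<bar>q x i j - q y i j\<bar>)"
      by (intro set_integral_mono qdiff_int' qdiff_int Cs) auto
    moreover have "- (LINT y:C|\<mu>. q x i j - q y i j) \<le> (LINT y:C|\<mu>. \<bar>q x i j - q y i j\<bar>)"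
    proof -
      have "(LINT y:C|\<mu>. - (q x i j - q y i j)) \<le> (LINT y:C|\<mu>. \<bar>q x i j - q y i j\<bar>)"
        by (intro set_integral_mono qdiff_int qdiff_int'' Cs) auto
      then show ?thesis using set_integral_uminus[OF qdiff_int'[OF Cs]] by simp
    qed
    ultimately have "\<bar>LINT y:C|\<mu>. q x i j - q y i j\<bar> \<le> (LINT y:C|\<mu>. \<bar>q x i j - q y i j\<bar>)" by simp
    then have "\<bar>LINT y:C|\<mu>. q x i j - q y i j\<bar> / ?m \<le> (LINT y:C|\<mu>. \<bar>q x i j - q y i j\<bar>) / ?m"
      using Cp by (intro divide_right_mono) auto
    moreover have "\<bar>(LINT y:C|\<mu>. q x i j - q y i j) / ?m\<bar> = \<bar>LINT y:C|\<mu>. q x i j - q y i j\<bar> / ?m"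
      using Cp by (simp add: abs_divide)
    ultimately show ?thesis unfolding e by simp
  qed
  have T1: "(\<Sum>i\<in>{1..n}. \<Sum>j\<in>{i<..n}. \<bar>q x i j - (LINT y:C|\<mu>. q y i j) / ?m\<bar>)
      \<le> (\<Sum>i\<in>{1..n}. \<Sum>j\<in>{i<..n}. (LINT y:C|\<mu>. \<bar>q x i j - q y i j\<bar>) / ?m)"
    by (intro sum_mono each)
  also have T2: "\<dots> = (\<Sum>i\<in>{1..n}. \<Sum>j\<in>{i<..n}. (LINT y:C|\<mu>. \<bar>q x i j - q y i j\<bar>)) / ?m"
    by (simp add: sum_divide_distrib)
  finally have T3: "(\<Sum>i\<in>{1..n}. \<Sum>j\<in>{i<..n}. \<bar>q x i j - (LINT y:C|\<mu>. q y i j) / ?m\<bar>) \<le> (\<Sum>i\<in>{1..n}. \<Sum>j\<in>{i<..n}. (LINT y:C|\<mu>. \<bar>q x i j - q y i j\<bar>)) / ?m" .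
  have "(\<Sum>i\<in>{1..n}. \<Sum>j\<in>{i<..n}. (LINT y:C|\<mu>. \<bar>q x i j - q y i j\<bar>)) =
      (\<Sum>i\<in>{1..n}. LINT y:C|\<mu>. (\<Sum>j\<in>{i<..n}. \<bar>q x i j - q y i j\<bar>))"
    by (intro sum.cong refl set_integral_sum'[symmetric] qdiff_int Cs) auto
  also have "\<dots> = (LINT y:C|\<mu>. (\<Sum>i\<in>{1..n}. \<Sum>j\<in>{i<..n}. \<bar>q x i j - q y i j\<bar>))"
    by (intro set_integral_sum'[symmetric] set_integrable_sum' qdiff_int Cs) auto
  also have "\<dots> = (LINT y:C|\<mu>. S2 x y)" unfolding S2_def by simp
  also have "\<dots> \<le> (LINT y:C|\<mu>. B)"
  proof (rule set_integral_mono)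
    show "set_integrable \<mu> C (S2 x)"
    proof (rule SI[where g="S2 x" and K="real n * real n"])
      fix y show "\<bar>S2 x y\<bar> \<le> real n * real n" using S2_bounds[of x y] by simp
    qed (use Cs in auto)
    show "set_integrable \<mu> C (\<lambda>y. B)" using const_int[OF Cs] .
    fix y assume "y \<in> C" then show "S2 x y \<le> B" using Bd by blast
  qed
  also have "\<dots> = ?m * B" using set_int_const[OF Cs] .
  finally have "(\<Sum>i\<in>{1..n}. \<Sum>j\<in>{i<..n}. (LINT y:C|\<mu>. \<bar>q x i j - q y i j\<bar>)) \<le> ?m * B" .
  then have "(\<Sum>i\<in>{1..n}. \<Sum>j\<in>{i<..n}. (LINT y:C|\<mu>. \<bar>q x i j - q y i j\<bar>)) / ?m \<le> ?m * B / ?m"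
    using Cp by (intro divide_right_mono) auto
  then show ?thesis using T3 Cp by simp
qed

end

lemma margin_le:
  assumes x: "x \<in> X" and ij: "1 \<le> i" "i < j" "j \<le> n"
  shows "margin n X P \<le> \<bar>pprob n (P x) i j - 1/2\<bar>"
proof -
  define T where "T y = {\<bar>pprob n (P y) i j - 1/2\<bar> | i j. 1 \<le> i \<and> i < j \<and> j \<le> n}" for y
  have fin: "finite (T y)" for y
  proof (rule finite_subset)
    show "T y \<subseteq> (\<lambda>(i,j). \<bar>pprob n (P y) i j - 1/2\<bar>) ` ({1..n} \<times> {1..n})"
      unfolding T_def by force
  qed auto
  have mem: "\<bar>pprob n (P y) i j - 1/2\<bar> \<in> T y" for y unfolding T_def using ij by blast
  have ne: "T y \<noteq> {}" for y using mem by blast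
  have nn: "0 \<le> Min (T y)" for y
  proof -
    have "\<forall>a\<in>T y. 0 \<le> a" unfolding T_def by auto
    then show ?thesis using fin ne by (simp add: Min_ge_iff)
  qed
  have "margin n X P \<le> Min (T x)" unfolding margin_def T_def[symmetric]
    by (rule cINF_lower[OF _ x]) (auto intro!: bdd_belowI[where m=0] nn)
  also have "\<dots> \<le> \<bar>pprob n (P x) i j - 1/2\<bar>" using fin mem by (rule Min_le)
  finally show ?thesis .
qed

context setting begin

interpretation prob_space \<mu> by (rule ps)

lemma kend_bound:
  assumes p: "is_partition \<mu> X PP" and H: "H > 0"
    and Hm: "\<forall>x\<in>X. \<forall>i j. 1 \<le> i \<and> i < j \<and> j \<le> n \<longrightarrow> H \<le> \<bar>q x i j - 1/2\<bar>"
    and sstC: "\<forall>C\<in>PP. SST n (cond_cell \<mu> P C)"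
    and Bd: "\<forall>C\<in>PP. \<forall>x\<in>C. \<forall>y\<in>C. S2 x y \<le> B"
    and x: "x \<in> X"
  shows "kendall n (kemeny n (P x)) (s_star n \<mu> P PP x) \<le> B / H"
proof -
  define C where "C = cell_of PP x"
  have C: "C \<in> PP" "x \<in> C" using cell_of_in[OF p x] unfolding C_def by auto
  have Cs: "C \<in> sets \<mu>" "C \<subseteq> X" "measure \<mu> C > 0"
    using part_sets[OF p C(1)] part_sub[OF p C(1)] part_pos[OF p C(1)] by auto
  define c where "c = pprob n (cond_cell \<mu> P C)"
  have sC: "SST n (cond_cell \<mu> P C)" using sstC C by blast
  have gc: "goodp n c" unfolding c_def using SST_goodp[OF sC] .
  have k1: "kemeny n (P x) = maj n (q x)" using kemeny_maj sst x q_X by simp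
  have k2: "s_star n \<mu> P PP x = maj n c" unfolding s_star_def C_def[symmetric] c_def using kemeny_maj[OF sC] .
  have "kendall n (kemeny n (P x)) (s_star n \<mu> P PP x) =
      (\<Sum>i\<in>{1..n}. \<Sum>j\<in>{i<..n}. if (q x i j > 1/2) \<noteq> (c i j > 1/2) then 1 else 0)"
    unfolding k1 k2 by (rule kendall_maj[OF goodq[OF x] gc])
  also have "\<dots> \<le> (\<Sum>i\<in>{1..n}. \<Sum>j\<in>{i<..n}. \<bar>q x i j - c i j\<bar> / H)"
  proof (intro sum_mono)
    fix i j assume ij: "i \<in> {1..n}" "j \<in> {i<..n}"
    have hq: "H \<le> \<bar>q x i j - 1/2\<bar>" using Hm x ij by auto
    show "(if (q x i j > 1/2) \<noteq> (c i j > 1/2) then 1 else 0) \<le> \<bar>q x i j - c i j\<bar> / H"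
    proof (cases "(q x i j > 1/2) \<noteq> (c i j > 1/2)")
      case True
      then have "\<bar>q x i j - 1/2\<bar> \<le> \<bar>q x i j - c i j\<bar>" by (cases "q x i j > 1/2") auto
      then have "H \<le> \<bar>q x i j - c i j\<bar>" using hq by simp
      then show ?thesis using True H by simp
    next
      case False then show ?thesis using H by simp
    qed
  qed
  also have "\<dots> = (\<Sum>i\<in>{1..n}. \<Sum>j\<in>{i<..n}. \<bar>q x i j - c i j\<bar>) / H"
    by (simp add: sum_divide_distrib)
  also have "\<dots> \<le> B / H"
  proof (rule divide_right_mono)
    have "\<forall>y\<in>C. S2 x y \<le> B" using Bd C by blast
    then have "(\<Sum>i\<in>{1..n}. \<Sum>j\<in>{i<..n}. \<bar>q x i j - (LINT y:C|\<mu>. q y i j) / measure \<mu> C\<bar>) \<le> B"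
      using q_cell_bound[OF Cs] by blast
    then show "(\<Sum>i\<in>{1..n}. \<Sum>j\<in>{i<..n}. \<bar>q x i j - c i j\<bar>) \<le> B"
      unfolding c_def using cond_q[OF Cs(1,2)] by simp
  qed (use H in simp)
  finally show ?thesis .
qed

lemma int_le_sup:
  fixes f :: "'a \<Rightarrow> real"
  assumes b: "\<And>x. 0 \<le> f x" "\<And>x. f x \<le> K"
  shows "(LINT x:X|\<mu>. f x) \<le> (SUP x\<in>X. f x)"
proof -
  have bdd: "bdd_above (f ` X)" using b(2) by (intro bdd_aboveI[where M=K]) auto
  obtain x0 where x0: "x0 \<in> X" using X1 by fastforce
  have sup0: "0 \<le> (SUP x\<in>X. f x)" using cSUP_upper[OF x0 bdd] b(1)[of x0] by linarith
  show ?thesis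
  proof (cases "set_integrable \<mu> X f")
    case True
    have "(LINT x:X|\<mu>. f x) \<le> (LINT x:X|\<mu>. (SUP x\<in>X. f x))"
      using True const_int[OF Xm] cSUP_upper[OF _ bdd] by (intro set_integral_mono) auto
    also have "\<dots> = measure \<mu> X * (SUP x\<in>X. f x)" using set_int_const[OF Xm] .
    also have "measure \<mu> X = 1" using X1 by (simp add: emeasure_eq_measure)
    finally show ?thesis by simp
  next
    case False
    then have "(LINT x:X|\<mu>. f x) = 0" unfolding set_lebesgue_integral_def set_integrable_def
      by (rule not_integrable_integral_eq)
    then show ?thesis using sup0 by simp
  qed
qed

end

theorem theorem9:
  fixes n :: nat
    and N :: "'a::euclidean_space \<Rightarrow> real"
    and \<mu> :: "'a measure"
    and \<X> :: "'a set"
    and P :: "'a \<Rightarrow> (nat \<Rightarrow> nat) \<Rightarrow> real"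
    and M :: real
    and \<P> :: "'a set set"
  assumes "is_norm N"
    and "prob_space \<mu>"
    and "sets \<mu> = sets borel"
    and "\<X> \<in> sets \<mu>"
    and "emeasure \<mu> \<X> = 1"
    and "\<forall>\<sigma>. set_borel_measurable \<mu> \<X> (\<lambda>x. P x \<sigma>)"
    and "\<forall>x\<in>\<X>. SST n (P x)"
    and "\<forall>x\<in>\<X>. \<forall>x'\<in>\<X>.
           (\<Sum>i\<in>{1..n}. \<Sum>j\<in>{i<..n}. \<bar>pprob n (P x) i j - pprob n (P x') i j\<bar>) \<le> M * N (x - x')"
    and "is_partition \<mu> \<X> \<P>"
  shows "(\<forall>s\<in>opt_piecewise n \<mu> \<X> P \<P>.
            ereal (risk n \<mu> \<X> P s - opt_risk n \<mu> \<X> P) \<le> ereal M * diam_part N \<P>)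
       \<and> (\<forall>(Ps :: nat \<Rightarrow> 'a set set) (ss :: nat \<Rightarrow> 'a \<Rightarrow> (nat \<Rightarrow> nat)).
            (\<forall>m. is_partition \<mu> \<X> (Ps m)) \<and> (\<lambda>m. diam_part N (Ps m)) \<longlonglongrightarrow> 0
            \<and> (\<forall>m. ss m \<in> opt_piecewise n \<mu> \<X> P (Ps m))
            \<longrightarrow> (\<lambda>m. risk n \<mu> \<X> P (ss m)) \<longlonglongrightarrow> opt_risk n \<mu> \<X> P)
       \<and> (margin n \<X> P > 0 \<and> (\<forall>C\<in>\<P>. SST n (cond_cell \<mu> P C))
            \<longrightarrow> ereal (LINT x:\<X>|\<mu>. kendall n (kemeny n (P x)) (s_star n \<mu> P \<P> x))
                  \<le> ereal (SUP x\<in>\<X>. kendall n (kemeny n (P x)) (s_star n \<mu> P \<P> x))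
              \<and> ereal (SUP x\<in>\<X>. kendall n (kemeny n (P x)) (s_star n \<mu> P \<P> x))
                  \<le> ereal (M / margin n \<X> P) * diam_part N \<P>)"
proof -
  have stp: "setting n \<mu> \<X> P" by (rule setting.intro) (use assms(2,4,5,6,7) in auto)
  interpret st: setting n \<mu> \<X> P by (rule stp)
  interpret prob_space \<mu> by (rule assms(2))
  have lip: "\<forall>x\<in>\<X>. \<forall>x'\<in>\<X>. st.S2 x x' \<le> M * N (x - x')"
    using assms(8) unfolding st.S2_def by (simp add: st.q_X)
  have P1: "ereal (risk n \<mu> \<X> P s - opt_risk n \<mu> \<X> P) \<le> ereal M * diam_part N PP"
    if p: "is_partition \<mu> \<X> PP" and s: "s \<in> opt_piecewise n \<mu> \<X> P PP" for PP s
  proof -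
    obtain B where B: "B \<ge> 0" "\<forall>C\<in>PP. \<forall>x\<in>C. \<forall>y\<in>C. st.S2 x y \<le> B" "ereal B \<le> ereal M * diam_part N PP"
      using B_exists[OF stp p assms(1) lip] by blast
    have "risk n \<mu> \<X> P s - opt_risk n \<mu> \<X> P \<le> B" by (rule st.part1[OF p B(2) s])
    then have "ereal (risk n \<mu> \<X> P s - opt_risk n \<mu> \<X> P) \<le> ereal B" by simp
    then show ?thesis using B(3) by (rule order_trans)
  qed
  show ?thesis
  proof (intro conjI ballI allI impI)
    fix s assume "s \<in> opt_piecewise n \<mu> \<X> P \<P>"
    then show "ereal (risk n \<mu> \<X> P s - opt_risk n \<mu> \<X> P) \<le> ereal M * diam_part N \<P>"
      using P1[OF assms(9)] by blast
  next
    fix Ps :: "nat \<Rightarrow> 'a set set" and ss :: "nat \<Rightarrow> 'a \<Rightarrow> nat \<Rightarrow> nat"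
    assume a: "(\<forall>m. is_partition \<mu> \<X> (Ps m)) \<and> (\<lambda>m. diam_part N (Ps m)) \<longlonglongrightarrow> 0
            \<and> (\<forall>m. ss m \<in> opt_piecewise n \<mu> \<X> P (Ps m))"
    define g where "g m = ereal (risk n \<mu> \<X> P (ss m) - opt_risk n \<mu> \<X> P)" for m
    have up: "g m \<le> ereal M * diam_part N (Ps m)" for m unfolding g_def using P1 a by blast
    have lo: "0 \<le> g m" for m
    proof -
      have "ss m \<in> rules n \<mu> \<X>" using a unfolding opt_piecewise_def piecewise_rules_def by blast
      then show ?thesis unfolding g_def using st.opt_le_risk by simp
    qed
    have lim: "(\<lambda>m. ereal M * diam_part N (Ps m)) \<longlonglongrightarrow> ereal M * 0"
      using a by (intro tendsto_cmult_ereal) auto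
    have "g \<longlonglongrightarrow> 0"
      by (rule tendsto_sandwich[where f="\<lambda>m. 0" and h="\<lambda>m. ereal M * diam_part N (Ps m)"])
         (use lo up lim in auto)
    then have "(\<lambda>m. risk n \<mu> \<X> P (ss m) - opt_risk n \<mu> \<X> P) \<longlonglongrightarrow> 0"
      unfolding g_def zero_ereal_def lim_ereal .
    then have "(\<lambda>m. (risk n \<mu> \<X> P (ss m) - opt_risk n \<mu> \<X> P) + opt_risk n \<mu> \<X> P) \<longlonglongrightarrow> 0 + opt_risk n \<mu> \<X> P"
      by (intro tendsto_add tendsto_const)
    then show "(\<lambda>m. risk n \<mu> \<X> P (ss m)) \<longlonglongrightarrow> opt_risk n \<mu> \<X> P" by simp
  next
    let ?f = "\<lambda>x. kendall n (kemeny n (P x)) (s_star n \<mu> P \<P> x)"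
    assume "margin n \<X> P > 0 \<and> (\<forall>C\<in>\<P>. SST n (cond_cell \<mu> P C))"
    then have H: "margin n \<X> P > 0" and sstC: "\<forall>C\<in>\<P>. SST n (cond_cell \<mu> P C)" by auto
    show "ereal (LINT x:\<X>|\<mu>. ?f x) \<le> ereal (SUP x\<in>\<X>. ?f x)"
      using st.int_le_sup[of ?f "real n * real n", OF kendall_bounds(1) kendall_bounds(2)] by simp
    obtain B where B: "B \<ge> 0" "\<forall>C\<in>\<P>. \<forall>x\<in>C. \<forall>y\<in>C. st.S2 x y \<le> B" "ereal B \<le> ereal M * diam_part N \<P>"
      using B_exists[OF stp assms(9) assms(1) lip] by blast
    have Hm: "\<forall>x\<in>\<X>. \<forall>i j. 1 \<le> i \<and> i < j \<and> j \<le> n \<longrightarrow> margin n \<X> P \<le> \<bar>st.q x i j - 1/2\<bar>"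
    proof (intro ballI allI impI)
      fix x i j assume "x \<in> \<X>" "1 \<le> i \<and> i < j \<and> j \<le> n"
      then show "margin n \<X> P \<le> \<bar>st.q x i j - 1/2\<bar>" using margin_le[of x \<X> i j n P] st.q_X by simp
    qed
    have pw: "?f x \<le> B / margin n \<X> P" if "x \<in> \<X>" for x
      by (rule st.kend_bound[OF assms(9) H Hm sstC B(2) that])
    obtain x0 where x0: "x0 \<in> \<X>" using assms(5) by fastforce
    have "(SUP x\<in>\<X>. ?f x) \<le> B / margin n \<X> P"
      using x0 pw by (intro cSUP_least) auto
    then have "ereal (SUP x\<in>\<X>. ?f x) \<le> ereal (1 / margin n \<X> P) * ereal B" by simp
    also have "\<dots> \<le> ereal (1 / margin n \<X> P) * (ereal M * diam_part N \<P>)"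
      using B(3) H by (intro ereal_mult_left_mono) auto
    also have "\<dots> = ereal (M / margin n \<X> P) * diam_part N \<P>"
      by (simp add: mult.assoc[symmetric])
    finally show "ereal (SUP x\<in>\<X>. ?f x) \<le> ereal (M / margin n \<X> P) * diam_part N \<P>" .
  qed
qed

end
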